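(* Fix $\kappa\ge20$, $\delta>0$ and constants $\mathcal{C},\beta,R>0$. For the function $d_*(T,\delta)$ defined in the context, let $$T_2(\delta)=\inf\Big\{T\ \Big|\ d_*(t,\delta)\le\frac{\kappa\,d_*(t/\kappa^2,\delta)}{8}\ \text{ for all } t\ge T\Big\}.$$ Then $T_2(\delta)<\infty$.
   Context: $M=(C,A,B)$ with $C\in\mathbb{R}^{p\times n}$, $A\in\mathbb{R}^{n\times n}$, $B\in\mathbb{R}^{n\times m}$, $\rho(A)<1$. $\mathcal{H}_{0,a,b}$ is the block Hankel matrix with $(i,j)$ block $CA^{i+j-2}B$ ($a=b=\infty$ allowed), and finite Hankel matrices are compared with $\mathcal{H}_{0,\infty,\infty}$ after zero padding to doubly infinite matrices (operator norm on $\ell^2$). For $T>0$, $$d_*(T,\delta)=\inf\Big\{d\in\mathbb{Z}_{\ge1}\ \Big|\ \mathcal{C}\beta R\sqrt d\sqrt{\frac{pd+\log(T/\delta)}{T}}\ge\|\mathcal{H}_{0,d,d}-\mathcal{H}_{0,\infty,\infty}\|_2\Big\}.$$ *)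

theory Defs
  imports "HOL-Analysis.Analysis" "Jordan_Normal_Form.Spectral_Radius"
begin

text \<open>Scalar entry of the block Hankel matrix: block (i,j) (0-indexed) is C A^(i+j) B.\<close>
definition hankel_entry :: "real mat \<Rightarrow> real mat \<Rightarrow> real mat \<Rightarrow> nat \<Rightarrow> nat \<Rightarrow> real" where
  "hankel_entry C A B r c =
     (let p = dim_row C; m = dim_col B
      in (C * (A ^\<^sub>m (r div p + c div m)) * B) $$ (r mod p, c mod m))"

text \<open>H_{0,a,b} zero-padded: blocks (i,j) with i < a, j < b kept, others zero.\<close>
definition hankel_fin :: "real mat \<Rightarrow> real mat \<Rightarrow> real mat \<Rightarrow> nat \<Rightarrow> nat \<Rightarrow> nat \<Rightarrow> nat \<Rightarrow> real" where
  "hankel_fin C A B a b r c =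
     (if r div dim_row C < a \<and> c div dim_col B < b then hankel_entry C A B r c else 0)"

definition l2_opnorm :: "(nat \<Rightarrow> nat \<Rightarrow> real) \<Rightarrow> real" where
  "l2_opnorm K = Sup {sqrt (\<Sum>i. (\<Sum>j. K i j * x j)\<^sup>2) | x.
                        summable (\<lambda>j. (x j)\<^sup>2) \<and> (\<Sum>j. (x j)\<^sup>2) \<le> 1}"

definition d_star :: "real mat \<Rightarrow> real mat \<Rightarrow> real mat \<Rightarrow> real \<Rightarrow> real \<Rightarrow> real \<Rightarrow> real \<Rightarrow> real \<Rightarrow> nat" where
  "d_star C A B Cc \<beta> R T \<delta> = Inf {d::nat. d \<ge> 1 \<and>
      Cc * \<beta> * R * sqrt (real d) * sqrt ((real (dim_row C) * real d + ln (T / \<delta>)) / T)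
        \<ge> l2_opnorm (\<lambda>r c. hankel_fin C A B d d r c - hankel_entry C A B r c)}"

definition T2 :: "real mat \<Rightarrow> real mat \<Rightarrow> real mat \<Rightarrow> real \<Rightarrow> real \<Rightarrow> real \<Rightarrow> real \<Rightarrow> real \<Rightarrow> ereal" where
  "T2 C A B Cc \<beta> R \<kappa> \<delta> = Inf {ereal T | T. T > 0 \<and> (\<forall>t \<ge> T.
      real (d_star C A B Cc \<beta> R t \<delta>) \<le> \<kappa> * real (d_star C A B Cc \<beta> R (t / \<kappa>\<^sup>2) \<delta>) / 8)}"

end

theory Submission
  imports Defs "HOL-Real_Asymp.Real_Asymp"
begin

definition Tsh :: "complex \<Rightarrow> (nat \<Rightarrow> complex) \<Rightarrow> nat \<Rightarrow> complex" where
  "Tsh \<mu> f k = f (Suc k) - \<mu> * f k"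

fun apl :: "complex list \<Rightarrow> (nat \<Rightarrow> complex) \<Rightarrow> nat \<Rightarrow> complex" where
  "apl [] f = f"
| "apl (\<mu> # ms) f = Tsh \<mu> (apl ms f)"

lemma Tsh_commute: "Tsh a (Tsh b f) = Tsh b (Tsh a f)"
  by (rule ext) (simp add: Tsh_def algebra_simps)

lemma apl_Tsh_commute: "apl ms (Tsh a f) = Tsh a (apl ms f)"
  by (induction ms) (simp_all add: Tsh_commute)

lemma apl_remove1: "a \<in> set ys \<Longrightarrow> apl ys f = Tsh a (apl (remove1 a ys) f)"
proof (induction ys)
  case Nil then show ?case by simp
next
  case (Cons y ys)
  show ?case
  proof (cases "a = y")
    case True then show ?thesis by simp
  next
    case False
    then have "a \<in> set ys" using Cons.prems by simp
    then show ?thesis using Cons.IH False by (simp add: Tsh_commute)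
  qed
qed

lemma apl_perm: "mset xs = mset ys \<Longrightarrow> apl xs f = apl ys f"
proof (induction xs arbitrary: ys)
  case Nil then show ?case by simp
next
  case (Cons x xs)
  then have x: "x \<in> set ys" by (metis list.set_intros(1) set_mset_mset)
  have "mset xs = mset (remove1 x ys)" using Cons.prems by (simp add: mset_remove1) (metis add_mset_remove_trivial)
  then have "apl xs f = apl (remove1 x ys) f" using Cons.IH by blast
  then show ?case using apl_remove1[OF x] by simp
qed

lemma apl_zeros: "(\<forall>\<mu>\<in>set ys. \<mu> = 0) \<Longrightarrow> apl ys f k = f (k + length ys)"
  by (induction ys arbitrary: k) (auto simp: Tsh_def)

lemma apl_linear_bound:
  assumes "\<forall>\<mu>\<in>set ys. norm \<mu> \<le> Bn" "\<And>i. i \<le> length ys \<Longrightarrow> norm (f (k + i)) \<le> b"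
  shows "norm (apl ys f k) \<le> (1 + Bn) ^ length ys * b"
  using assms
proof (induction ys arbitrary: k)
  case Nil
  then show ?case using Nil(2)[of 0] by simp
next
  case (Cons \<mu> ys)
  have b0: "0 \<le> b" using Cons.prems(2)[of 0] by (simp, meson norm_ge_zero order_trans)
  have B0: "0 \<le> Bn" using Cons.prems(1) by (simp, meson norm_ge_zero order_trans)
  have h1: "norm (apl ys f (Suc k)) \<le> (1 + Bn) ^ length ys * b"
  proof (rule Cons.IH)
    show "\<forall>\<mu>\<in>set ys. norm \<mu> \<le> Bn" using Cons.prems by auto
    fix i assume "i \<le> length ys"
    then show "norm (f (Suc k + i)) \<le> b" using Cons.prems(2)[of "Suc i"] by simp
  qed
  have h0: "norm (apl ys f k) \<le> (1 + Bn) ^ length ys * b"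
    using Cons.IH[of k] Cons.prems by auto
  have "norm (apl (\<mu> # ys) f k) = norm (apl ys f (Suc k) - \<mu> * apl ys f k)"
    by (simp add: Tsh_def)
  also have "\<dots> \<le> norm (apl ys f (Suc k)) + norm \<mu> * norm (apl ys f k)"
    by (metis norm_mult norm_triangle_ineq4)
  also have "\<dots> \<le> (1 + Bn) ^ length ys * b + Bn * ((1 + Bn) ^ length ys * b)"
    using h0 h1 Cons.prems(1) b0 B0 by (intro add_mono mult_mono) auto
  finally show ?case by (simp add: algebra_simps)
qed

lemma Tsh_zero_geom: "Tsh lam s = (\<lambda>_. 0) \<Longrightarrow> s k = lam ^ k * s 0"
proof (induction k)
  case 0 then show ?case by simp
next
  case (Suc k)
  have "s (Suc k) = lam * s k" using fun_cong[OF Suc.prems, of k] by (simp add: Tsh_def)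
  then show ?case using Suc by simp
qed

lemma Tsh_up_bound:
  fixes g :: "nat \<Rightarrow> complex"
  assumes "norm \<mu> \<le> r" "r < \<theta>" "0 \<le> r" "\<And>k. norm (Tsh \<mu> g k) \<le> M * \<theta> ^ k"
  shows "\<exists>K. \<forall>k. norm (g k) \<le> K * \<theta> ^ k"
proof -
  define K where "K = max (norm (g 0)) (M / (\<theta> - r))"
  have th: "\<theta> > 0" using assms by simp
  have M0: "M \<ge> 0" using assms(4)[of 0] by (simp, meson norm_ge_zero order_trans)
  have K0: "K \<ge> 0" unfolding K_def by (simp add: le_max_iff_disj)
  have KM: "r * K + M \<le> \<theta> * K"
  proof -
    have "M / (\<theta> - r) \<le> K" unfolding K_def by simp
    then have "M \<le> (\<theta> - r) * K" using th assms(2)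
      by (simp add: pos_divide_le_eq mult.commute)
    then show ?thesis by (simp add: algebra_simps)
  qed
  have "norm (g k) \<le> K * \<theta> ^ k" for k
  proof (induction k)
    case 0 then show ?case unfolding K_def by simp
  next
    case (Suc k)
    have "g (Suc k) = Tsh \<mu> g k + \<mu> * g k" by (simp add: Tsh_def)
    then have "norm (g (Suc k)) \<le> norm (Tsh \<mu> g k) + norm \<mu> * norm (g k)"
      by (metis norm_mult norm_triangle_ineq)
    also have "\<dots> \<le> M * \<theta> ^ k + r * (K * \<theta> ^ k)"
      using Suc assms(1,3,4) by (intro add_mono mult_mono) auto
    also have "\<dots> = (r * K + M) * \<theta> ^ k" by (simp add: algebra_simps)
    also have "\<dots> \<le> (\<theta> * K) * \<theta> ^ k" using KM th by (intro mult_right_mono) auto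
    finally show ?case by (simp add: algebra_simps)
  qed
  then show ?thesis by blast
qed

lemma apl_up_bound:
  assumes "\<forall>\<mu>\<in>set ms. norm \<mu> \<le> r" "r < \<theta>" "0 \<le> r"
    and "\<And>k. norm (apl ms f k) \<le> M * \<theta> ^ k"
  shows "\<exists>K. \<forall>k. norm (f k) \<le> K * \<theta> ^ k"
  using assms
proof (induction ms arbitrary: M)
  case Nil then show ?case by auto
next
  case (Cons \<mu> ms)
  have "\<exists>K. \<forall>k. norm (apl ms f k) \<le> K * \<theta> ^ k"
    using Cons.prems by (intro Tsh_up_bound[of \<mu> r \<theta> _ M]) auto
  then obtain K where "\<And>k. norm (apl ms f k) \<le> K * \<theta> ^ k" by blast
  then show ?case using Cons.IH[of K] Cons.prems by auto
qed

lemma peel: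
  assumes "apl zs f = (\<lambda>_. 0)" "f \<noteq> (\<lambda>_. 0)"
  shows "\<exists>j lam ys. drop j zs = lam # ys \<and> apl (lam # ys) f = (\<lambda>_. 0) \<and> apl ys f \<noteq> (\<lambda>_. 0)"
  using assms
proof (induction zs)
  case Nil then show ?case by simp
next
  case (Cons z zs)
  show ?case
  proof (cases "apl zs f = (\<lambda>_. 0)")
    case True
    then obtain j lam ys where "drop j zs = lam # ys" "apl (lam # ys) f = (\<lambda>_. 0)" "apl ys f \<noteq> (\<lambda>_. 0)"
      using Cons by blast
    then show ?thesis by (intro exI[of _ "Suc j"]) auto
  next
    case False
    then show ?thesis using Cons.prems by (intro exI[of _ 0] exI[of _ z] exI[of _ zs]) auto
  qed
qed

definition good :: "(nat \<Rightarrow> real) \<Rightarrow> bool" where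
  "good e \<longleftrightarrow> (\<exists>K0. \<forall>k\<ge>K0. e k = 0) \<or>
     (\<exists>\<sigma>>0. \<sigma> < 1 \<and> (\<exists>c>0. \<exists>N. \<forall>k. \<exists>i\<le>N. c * \<sigma> ^ k \<le> \<bar>e (k + i)\<bar>) \<and>
        (\<forall>\<theta>>\<sigma>. \<exists>M. \<forall>k. \<bar>e k\<bar> \<le> M * \<theta> ^ k))"

lemma good_intro:
  fixes e :: "nat \<Rightarrow> real"
  assumes ann: "apl zs (\<lambda>k. of_real (e k)) = (\<lambda>_. 0)"
    and th0: "0 < \<theta>0" "\<theta>0 < 1" and bd: "\<And>k. \<bar>e k\<bar> \<le> M0 * \<theta>0 ^ k"
  shows "good e"
proof (cases "(\<lambda>k. complex_of_real (e k)) = (\<lambda>_. 0)")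
  case True
  then have "e k = 0" for k by (metis of_real_eq_0_iff)
  then show ?thesis unfolding good_def by auto
next
  case False
  define f where "f = (\<lambda>k. complex_of_real (e k))"
  define zs' where "zs' = rev (sort_key norm zs)"
  have "mset zs' = mset zs" unfolding zs'_def by simp
  then have ann': "apl zs' f = (\<lambda>_. 0)" using ann apl_perm unfolding f_def by metis
  have sorted: "sorted_wrt (\<lambda>x y. norm y \<le> norm x) zs'"
  proof -
    have "sorted (map norm (sort_key norm zs))" by simp
    then have "sorted_wrt (\<lambda>x y. norm x \<le> norm y) (sort_key norm zs)"
      by (simp add: sorted_wrt_map)
    then show ?thesis unfolding zs'_def by (simp add: sorted_wrt_rev)
  qed
  obtain j lam ys where dj: "drop j zs' = lam # ys" and z1: "apl (lam # ys) f = (\<lambda>_. 0)"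
    and nz: "apl ys f \<noteq> (\<lambda>_. 0)"
    using peel[OF ann'] False unfolding f_def by blast
  have "sorted_wrt (\<lambda>x y. norm y \<le> norm x) (lam # ys)"
    using sorted dj by (metis sorted_wrt_drop)
  then have ys_le: "\<forall>\<mu>\<in>set ys. norm \<mu> \<le> norm lam" by simp
  define s where "s = apl ys f"
  have Ts: "Tsh lam s = (\<lambda>_. 0)" using z1 unfolding s_def by simp
  have sk: "s k = lam ^ k * s 0" for k using Tsh_zero_geom[OF Ts] .
  have s0: "s 0 \<noteq> 0"
  proof
    assume "s 0 = 0"
    then have "s = (\<lambda>_. 0)" by (intro ext) (metis sk mult_zero_right)
    then show False using nz unfolding s_def by simp
  qed
  define L where "L = length ys"
  have fnorm: "norm (f k) = \<bar>e k\<bar>" for k unfolding f_def by simp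
  have M0: "M0 \<ge> 0" using bd[of 0] by simp
  have lam_le: "norm lam \<le> \<theta>0"
  proof (rule ccontr)
    assume "\<not> norm lam \<le> \<theta>0"
    then have gt: "norm lam / \<theta>0 > 1" using th0 by simp
    define Q where "Q = (1 + norm lam) ^ L * M0 / norm (s 0)"
    obtain k where k: "Q < (norm lam / \<theta>0) ^ k" using real_arch_pow[OF gt] by blast
    have "norm (s k) \<le> (1 + norm lam) ^ L * (M0 * \<theta>0 ^ k)"
      unfolding s_def L_def
    proof (rule apl_linear_bound[OF ys_le])
      fix i assume "i \<le> length ys"
      have "\<theta>0 ^ (k + i) \<le> \<theta>0 ^ k" using th0 by (simp add: power_decreasing)
      then have "M0 * \<theta>0 ^ (k + i) \<le> M0 * \<theta>0 ^ k" using M0 by (rule mult_left_mono)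
      then show "norm (f (k + i)) \<le> M0 * \<theta>0 ^ k"
        using bd[of "k+i"] fnorm[of "k+i"] by linarith
    qed
    then have "norm lam ^ k * norm (s 0) \<le> (1 + norm lam) ^ L * M0 * \<theta>0 ^ k"
      using sk[of k] by (simp add: norm_mult norm_power algebra_simps)
    then have "norm lam ^ k / \<theta>0 ^ k \<le> Q"
      using s0 th0 unfolding Q_def by (simp add: divide_simps mult.commute mult.left_commute)
    then have "(norm lam / \<theta>0) ^ k \<le> Q" by (simp add: power_divide)
    then show False using k by simp
  qed
  show ?thesis
  proof (cases "lam = 0")
    case True
    then have "\<forall>\<mu>\<in>set (lam # ys). \<mu> = 0" using ys_le by auto
    then have "f (k + length (lam # ys)) = 0" for k using apl_zeros[of "lam # ys" f k] z1
      by simp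
    then have fz: "e (k + length (lam # ys)) = 0" for k unfolding f_def by simp
    have "\<forall>k\<ge>length (lam # ys). e k = 0"
    proof (intro allI impI)
      fix k assume "k \<ge> length (lam # ys)"
      then have "k = (k - length (lam # ys)) + length (lam # ys)" by simp
      then show "e k = 0" using fz by metis
    qed
    then show ?thesis unfolding good_def by blast
  next
    case False
    define \<sigma> where "\<sigma> = norm lam"
    have sp: "\<sigma> > 0" using False unfolding \<sigma>_def by simp
    have s1: "\<sigma> < 1" using lam_le th0 unfolding \<sigma>_def by simp
    define c where "c = norm (s 0) / 2 ^ (Suc L)"
    have cp: "c > 0" using s0 unfolding c_def by simp
    have low: "\<exists>i\<le>L. c * \<sigma> ^ k \<le> \<bar>e (k + i)\<bar>" for k
    proof (rule ccontr)
      assume "\<not> ?thesis"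
      then have lt: "\<And>i. i \<le> L \<Longrightarrow> norm (f (k + i)) \<le> c * \<sigma> ^ k" using fnorm by force
      have ys1: "\<forall>\<mu>\<in>set ys. norm \<mu> \<le> 1" using ys_le s1 unfolding \<sigma>_def by force
      have "norm (s k) \<le> (1 + 1) ^ L * (c * \<sigma> ^ k)"
        unfolding s_def L_def by (rule apl_linear_bound[OF ys1]) (use lt L_def in auto)
      also have "\<dots> = norm (s 0) * \<sigma> ^ k / 2" unfolding c_def by simp
      also have "\<dots> < norm (s 0) * \<sigma> ^ k" using s0 sp by simp
      finally show False using sk[of k] unfolding \<sigma>_def by (simp add: norm_mult norm_power)
    qed
    have up: "\<exists>M. \<forall>k. \<bar>e k\<bar> \<le> M * \<theta> ^ k" if "\<theta> > \<sigma>" for \<theta>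
    proof -
      have "\<exists>K. \<forall>k. norm (f k) \<le> K * \<theta> ^ k"
        by (rule apl_up_bound[of "lam # ys" "\<sigma>" \<theta> f 0]) (use ys_le that z1 in \<open>auto simp: \<sigma>_def\<close>)
      then show ?thesis using fnorm by auto
    qed
    show ?thesis unfolding good_def using sp s1 cp low up by blast
  qed
qed

definition LN :: "nat \<Rightarrow> complex poly \<Rightarrow> (nat \<Rightarrow> complex) \<Rightarrow> nat \<Rightarrow> complex" where
  "LN N q f k = (\<Sum>i<N. coeff q i * f (k + i))"

lemma LN_ext:
  assumes "degree q < N" "N \<le> N'"
  shows "LN N' q f k = LN N q f k"
  unfolding LN_def
proof (rule sum.mono_neutral_right)
  show "\<forall>i\<in>{..<N'} - {..<N}. coeff q i * f (k + i) = 0"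
    using assms by (auto simp: coeff_eq_0)
qed (use assms in auto)

lemma LN_smult: "LN N (Polynomial.smult c q) f k = c * LN N q f k"
  unfolding LN_def by (simp add: sum_distrib_left mult.assoc)

lemma LN_lin:
  assumes "degree P < N"
  shows "LN (Suc N) ([:-a, 1:] * P) f k = Tsh a (LN N P f) k"
proof -
  have eq: "[:-a, 1:] * P = Polynomial.smult (-a) P + pCons 0 P" by simp
  have c: "coeff ([:-a, 1:] * P) i = coeff (pCons 0 P) i - a * coeff P i" for i
    unfolding eq by simp
  have "LN (Suc N) ([:-a, 1:] * P) f k
      = (\<Sum>i<Suc N. coeff (pCons 0 P) i * f (k + i)) - (\<Sum>i<Suc N. a * coeff P i * f (k + i))"
    unfolding LN_def c left_diff_distrib sum_subtractf ..
  also have "(\<Sum>i<Suc N. coeff (pCons 0 P) i * f (k + i)) = (\<Sum>i<N. coeff P i * f (Suc k + i))"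
    by (subst sum.lessThan_Suc_shift) simp
  also have "(\<Sum>i<Suc N. a * coeff P i * f (k + i)) = (\<Sum>i<N. a * coeff P i * f (k + i))"
    using assms by (simp add: coeff_eq_0)
  also have "\<dots> = a * (\<Sum>i<N. coeff P i * f (k + i))"
    by (simp add: sum_distrib_left mult.assoc)
  finally show ?thesis unfolding Tsh_def LN_def by simp
qed

lemma LN_prod:
  "LN (Suc (length as)) (\<Prod>a\<leftarrow>as. [:- a, 1:]) f = apl as f"
proof (induction as)
  case Nil
  show ?case by (rule ext) (simp add: LN_def)
next
  case (Cons a as)
  have deg: "degree (\<Prod>a\<leftarrow>as. [:- a, 1:]) < Suc (length as)"
    by (simp add: degree_linear_factors)
  have pe: "(\<Prod>a\<leftarrow>a # as. [:- a, 1:]) = [:- a, 1:] * (\<Prod>a\<leftarrow>as. [:- a, 1:])" by simp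
  show ?case
  proof (rule ext)
    fix k
    have "LN (Suc (length (a # as))) (\<Prod>a\<leftarrow>a # as. [:- a, 1:]) f k
        = Tsh a (LN (Suc (length as)) (\<Prod>a\<leftarrow>as. [:- a, 1:]) f) k"
      unfolding pe using LN_lin[OF deg] by simp
    then show "LN (Suc (length (a # as))) (\<Prod>a\<leftarrow>a # as. [:- a, 1:]) f k = apl (a # as) f k"
      using Cons.IH by simp
  qed
qed

lemma annihilator_apl:
  fixes e :: "nat \<Rightarrow> real" and \<alpha> :: "nat \<Rightarrow> real"
  assumes "\<exists>i\<le>n. \<alpha> i \<noteq> 0" "\<And>k. (\<Sum>i<Suc n. \<alpha> i * e (k + i)) = 0"
  shows "\<exists>zs. apl zs (\<lambda>k. complex_of_real (e k)) = (\<lambda>_. 0)"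
proof -
  define q where "q = (\<Sum>i<Suc n. monom (complex_of_real (\<alpha> i)) i)"
  have cq: "coeff q j = (if j < Suc n then complex_of_real (\<alpha> j) else 0)" for j
    unfolding q_def by (simp add: coeff_sum coeff_monom)
  have q0: "q \<noteq> 0"
  proof
    assume "q = 0"
    then have "\<alpha> i = 0" if "i \<le> n" for i using cq[of i] that by simp
    then show False using assms(1) by blast
  qed
  have degq: "degree q < Suc n"
    by (rule le_less_trans[OF degree_le[of n]]) (use cq in auto)
  obtain as where fa: "Polynomial.smult (lead_coeff q) (\<Prod>a\<leftarrow>as. [:- a, 1:]) = q" and la: "length as = degree q"
    using fundamental_theorem_algebra_factorized[of q] by blast
  define f where "f = (\<lambda>k. complex_of_real (e k))"
  have "apl as f k = 0" for k
  proof -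
    have "LN (Suc n) q f k = complex_of_real (\<Sum>i<Suc n. \<alpha> i * e (k + i))"
      unfolding LN_def cq f_def by simp
    then have z: "LN (Suc n) q f k = 0" using assms(2)[of k] by (simp only: of_real_0)
    have dP: "degree (\<Prod>a\<leftarrow>as. [:- a, 1:]) < Suc (length as)"
      by (simp add: degree_linear_factors)
    have "LN (Suc n) q f k = lead_coeff q * LN (Suc n) (\<Prod>a\<leftarrow>as. [:- a, 1:]) f k"
      using fa LN_smult by metis
    also have "LN (Suc n) (\<Prod>a\<leftarrow>as. [:- a, 1:]) f k = LN (Suc (length as)) (\<Prod>a\<leftarrow>as. [:- a, 1:]) f k"
      by (rule LN_ext[OF dP]) (use la degq in auto)
    also have "\<dots> = apl as f k" by (simp add: LN_prod)
    finally show ?thesis using z q0 by simp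
  qed
  then show ?thesis unfolding f_def by blast
qed

lemma pow_mat_add:
  assumes A: "A \<in> carrier_mat n n"
  shows "A ^\<^sub>m (k + i) = A ^\<^sub>m k * A ^\<^sub>m i"
proof (induction i)
  case 0 then show ?case using A by simp
next
  case (Suc i)
  have "A ^\<^sub>m (k + Suc i) = (A ^\<^sub>m k * A ^\<^sub>m i) * A" using Suc by simp
  also have "\<dots> = A ^\<^sub>m k * (A ^\<^sub>m i * A)" using A by (intro assoc_mult_mat) auto
  finally show ?case by simp
qed

lemma smult_pow_mat:
  fixes A :: "'a::comm_ring_1 mat"
  assumes A: "A \<in> carrier_mat n n"
  shows "(c \<cdot>\<^sub>m A) ^\<^sub>m k = (c ^ k) \<cdot>\<^sub>m (A ^\<^sub>m k)"
proof (induction k)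
  case 0 then show ?case using A by (intro eq_matI) auto
next
  case (Suc k)
  have "(c \<cdot>\<^sub>m A) ^\<^sub>m Suc k = ((c ^ k) \<cdot>\<^sub>m (A ^\<^sub>m k)) * (c \<cdot>\<^sub>m A)" using Suc by simp
  also have "\<dots> = (c ^ Suc k) \<cdot>\<^sub>m (A ^\<^sub>m Suc k)"
    using A by (intro eq_matI) (auto simp: scalar_prod_def sum_distrib_left mult_ac intro!: sum.cong)
  finally show ?case .
qed

lemma entry_CXY:
  assumes C: "C \<in> carrier_mat p n" and X: "X \<in> carrier_mat n n" and Y: "Y \<in> carrier_mat n m"
    and a: "a < p" and b: "b < m"
  shows "(C * (X * Y)) $$ (a, b) = (\<Sum>j<n. C $$ (a, j) * (\<Sum>l<n. X $$ (j, l) * Y $$ (l, b)))"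
  using assms by (simp add: scalar_prod_def lessThan_atLeast0)

lemma hankel_entry_CAB:
  assumes C: "C \<in> carrier_mat p n" and A: "A \<in> carrier_mat n n" and B: "B \<in> carrier_mat n m"
  shows "C * (A ^\<^sub>m k) * B = C * (A ^\<^sub>m k * B)"
  using assms by (intro assoc_mult_mat) auto

lemma entry_annihilator:
  fixes C A B :: "real mat"
  assumes C: "C \<in> carrier_mat p n" and A: "A \<in> carrier_mat n n" and B: "B \<in> carrier_mat n m"
    and a: "a < p" and b: "b < m" and n: "n > 0"
  shows "\<exists>zs. apl zs (\<lambda>k. complex_of_real ((C * (A ^\<^sub>m k) * B) $$ (a, b))) = (\<lambda>_. 0)"
proof -
  define W where "W = mat (Suc n) (Suc n) (\<lambda>(r, i). (A ^\<^sub>m i * B) $$ (if r < n then r else 0, b))"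
  have Wc: "W \<in> carrier_mat (Suc n) (Suc n)" unfolding W_def by simp
  have "row W 0 = row W n" unfolding W_def using n by (intro eq_vecI) auto
  then have "det W = 0" using n by (intro det_identical_rows[OF Wc, of 0 n]) auto
  then obtain v where v: "v \<in> carrier_vec (Suc n)" "v \<noteq> 0\<^sub>v (Suc n)" "W *\<^sub>v v = 0\<^sub>v (Suc n)"
    using det_0_iff_vec_prod_zero_field[OF Wc] by blast
  define \<alpha> where "\<alpha> i = v $ i" for i
  have ex: "\<exists>i\<le>n. \<alpha> i \<noteq> 0"
  proof (rule ccontr)
    assume "\<not> ?thesis"
    then have "v = 0\<^sub>v (Suc n)" using v(1) unfolding \<alpha>_def by (intro eq_vecI) auto
    then show False using v(2) by simp
  qed
  have ker: "(\<Sum>i<Suc n. (A ^\<^sub>m i * B) $$ (l, b) * \<alpha> i) = 0" if l: "l < n" for l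
  proof -
    have "(W *\<^sub>v v) $ l = 0" using v(3) l by simp
    then show ?thesis using l v(1) unfolding W_def \<alpha>_def
      by (simp add: scalar_prod_def lessThan_atLeast0)
  qed
  define e where "e k = (C * (A ^\<^sub>m k) * B) $$ (a, b)" for k
  have ek: "e (k + i) = (\<Sum>j<n. C $$ (a, j) * (\<Sum>l<n. (A ^\<^sub>m k) $$ (j, l) * (A ^\<^sub>m i * B) $$ (l, b)))" for k i
  proof -
    have "C * (A ^\<^sub>m (k + i)) * B = C * (A ^\<^sub>m k * A ^\<^sub>m i) * B"
      by (simp add: pow_mat_add[OF A])
    also have "\<dots> = C * ((A ^\<^sub>m k * A ^\<^sub>m i) * B)"
      using A B C by (intro assoc_mult_mat) auto
    also have "(A ^\<^sub>m k * A ^\<^sub>m i) * B = A ^\<^sub>m k * (A ^\<^sub>m i * B)"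
      using A B by (intro assoc_mult_mat) auto
    finally have "C * (A ^\<^sub>m (k + i)) * B = C * (A ^\<^sub>m k * (A ^\<^sub>m i * B))" .
    moreover have "A ^\<^sub>m k \<in> carrier_mat n n" "A ^\<^sub>m i * B \<in> carrier_mat n m"
      using A B by auto
    ultimately show ?thesis unfolding e_def using entry_CXY[OF C _ _ a b, of "A ^\<^sub>m k" "A ^\<^sub>m i * B"]
      by simp
  qed
  have "(\<Sum>i<Suc n. \<alpha> i * e (k + i)) = 0" for k
  proof -
    have "(\<Sum>i<Suc n. \<alpha> i * e (k + i))
       = (\<Sum>i<Suc n. \<Sum>j<n. \<Sum>l<n. C $$ (a, j) * (A ^\<^sub>m k) $$ (j, l) * ((A ^\<^sub>m i * B) $$ (l, b) * \<alpha> i))"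
      unfolding ek by (simp add: sum_distrib_left sum_distrib_right algebra_simps)
    also have "\<dots> = (\<Sum>j<n. \<Sum>i<Suc n. \<Sum>l<n. C $$ (a, j) * (A ^\<^sub>m k) $$ (j, l) * ((A ^\<^sub>m i * B) $$ (l, b) * \<alpha> i))"
      by (rule sum.swap)
    also have "\<dots> = (\<Sum>j<n. \<Sum>l<n. \<Sum>i<Suc n. C $$ (a, j) * (A ^\<^sub>m k) $$ (j, l) * ((A ^\<^sub>m i * B) $$ (l, b) * \<alpha> i))"
      by (intro sum.cong refl sum.swap)
    also have "\<dots> = (\<Sum>j<n. \<Sum>l<n. C $$ (a, j) * (A ^\<^sub>m k) $$ (j, l) * (\<Sum>i<Suc n. (A ^\<^sub>m i * B) $$ (l, b) * \<alpha> i))"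
      by (simp only: sum_distrib_left)
    also have "\<dots> = 0" using ker by simp
    finally show ?thesis .
  qed
  from annihilator_apl[OF ex this] show ?thesis unfolding e_def .
qed

lemma smult_mat_mult_vec':
  fixes M :: "'a::comm_ring_1 mat"
  assumes "M \<in> carrier_mat nr nc" "v \<in> carrier_vec nc"
  shows "(c \<cdot>\<^sub>m M) *\<^sub>v v = c \<cdot>\<^sub>v (M *\<^sub>v v)"
  using assms by (intro eq_vecI) (auto simp: scalar_prod_def sum_distrib_left mult_ac)

lemma pow_entry_bound:
  fixes A :: "real mat"
  assumes A: "A \<in> carrier_mat n n" and n: "n > 0"
    and sr: "spectral_radius (map_mat complex_of_real A) < 1"
  shows "\<exists>\<theta>0 c. 0 < \<theta>0 \<and> \<theta>0 < 1 \<and> 0 \<le> c \<and>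
           (\<forall>k i j. i < n \<longrightarrow> j < n \<longrightarrow> \<bar>(A ^\<^sub>m k) $$ (i, j)\<bar> \<le> c * \<theta>0 ^ k)"
proof -
  define Ac where "Ac = map_mat complex_of_real A"
  have Ac: "Ac \<in> carrier_mat n n" unfolding Ac_def using A by simp
  define \<rho> where "\<rho> = spectral_radius Ac"
  have "\<rho> \<in> norm ` spectrum Ac" unfolding \<rho>_def by (rule spectral_radius_mem_max(1)[OF Ac n])
  then have rho0: "\<rho> \<ge> 0" by auto
  have rho1: "\<rho> < 1" using sr unfolding \<rho>_def Ac_def .
  define \<theta>0 where "\<theta>0 = (1 + \<rho>) / 2"
  have th0: "0 < \<theta>0" "\<theta>0 < 1" "\<rho> < \<theta>0" using rho0 rho1 unfolding \<theta>0_def by auto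
  define A' where "A' = complex_of_real (1 / \<theta>0) \<cdot>\<^sub>m Ac"
  have A': "A' \<in> carrier_mat n n" unfolding A'_def using Ac by simp
  have srA': "spectral_radius A' < 1"
  proof -
    have "spectral_radius A' \<in> norm ` spectrum A'" by (rule spectral_radius_mem_max(1)[OF A' n])
    then obtain ev where ev: "eigenvalue A' ev" and eq: "spectral_radius A' = norm ev"
      unfolding spectrum_def by auto
    then obtain v where v: "eigenvector A' v ev" unfolding eigenvalue_def by auto
    have vc: "v \<in> carrier_vec n" "v \<noteq> 0\<^sub>v n" and Av: "A' *\<^sub>v v = ev \<cdot>\<^sub>v v"
      using v A' unfolding eigenvector_def by auto
    have "A' *\<^sub>v v = complex_of_real (1 / \<theta>0) \<cdot>\<^sub>v (Ac *\<^sub>v v)"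
      unfolding A'_def by (rule smult_mat_mult_vec'[OF Ac vc(1)])
    then have "Ac *\<^sub>v v = (complex_of_real \<theta>0 * ev) \<cdot>\<^sub>v v"
    proof -
      assume h: "A' *\<^sub>v v = complex_of_real (1 / \<theta>0) \<cdot>\<^sub>v (Ac *\<^sub>v v)"
      show ?thesis
      proof (rule eq_vecI)
        fix i assume i: "i < dim_vec ((complex_of_real \<theta>0 * ev) \<cdot>\<^sub>v v)"
        then have i': "i < n" using vc by simp
        have "(A' *\<^sub>v v) $ i = (ev \<cdot>\<^sub>v v) $ i" using Av by simp
        then have "complex_of_real (1 / \<theta>0) * (Ac *\<^sub>v v) $ i = ev * v $ i"
          using h i' vc Ac by simp
        then show "(Ac *\<^sub>v v) $ i = ((complex_of_real \<theta>0 * ev) \<cdot>\<^sub>v v) $ i"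
          using i' vc th0 by (simp add: field_simps)
      qed (use vc Ac in simp)
    qed
    then have "eigenvector Ac v (complex_of_real \<theta>0 * ev)"
      unfolding eigenvector_def using vc Ac by simp
    then have "eigenvalue Ac (complex_of_real \<theta>0 * ev)" unfolding eigenvalue_def by blast
    then have "norm (complex_of_real \<theta>0 * ev) \<le> \<rho>"
      unfolding \<rho>_def by (intro spectral_radius_mem_max(2)[OF Ac n]) (auto simp: spectrum_def)
    then have "\<theta>0 * norm ev \<le> \<rho>" using th0 by (simp add: norm_mult)
    then have "\<theta>0 * norm ev < \<theta>0 * 1" using th0 by linarith
    then have "norm ev < 1" using th0 by (simp only: mult_less_cancel_left_pos)
    then show ?thesis using eq by simp
  qed
  obtain c where c: "\<And>k. norm_bound (A' ^\<^sub>m k) c"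
    using spectral_radius_jnf_norm_bound_less_1[OF A' srA']
      char_poly_factorized[OF A'] jordan_nf_exists[OF A'] by blast
  have c0: "c \<ge> 0" using c[of 0] n A' unfolding norm_bound_def
    by (metis norm_ge_zero order_trans pow_mat_dim_square)
  have bd: "\<bar>(A ^\<^sub>m k) $$ (i, j)\<bar> \<le> c * \<theta>0 ^ k" if ij: "i < n" "j < n" for k i j
  proof -
    have pw: "A' ^\<^sub>m k = (complex_of_real (1 / \<theta>0)) ^ k \<cdot>\<^sub>m (Ac ^\<^sub>m k)"
      unfolding A'_def by (rule smult_pow_mat[OF Ac])
    have "Ac ^\<^sub>m k = map_mat complex_of_real (A ^\<^sub>m k)"
      unfolding Ac_def by (rule of_real_hom.mat_hom_pow[OF A, symmetric])
    then have "(A' ^\<^sub>m k) $$ (i, j) = (complex_of_real (1 / \<theta>0)) ^ k * complex_of_real ((A ^\<^sub>m k) $$ (i, j))"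
      unfolding pw using ij A by simp
    moreover have "norm ((A' ^\<^sub>m k) $$ (i, j)) \<le> c"
      using c[of k] ij A' unfolding norm_bound_def by simp
    ultimately have "(1 / \<theta>0) ^ k * \<bar>(A ^\<^sub>m k) $$ (i, j)\<bar> \<le> c"
      using th0 by (simp add: norm_mult norm_power norm_divide)
    then show ?thesis using th0 by (simp add: field_simps power_divide)
  qed
  show ?thesis using th0 c0 bd by blast
qed

lemma entry_good:
  fixes C A B :: "real mat"
  assumes C: "C \<in> carrier_mat p n" and A: "A \<in> carrier_mat n n" and B: "B \<in> carrier_mat n m"
    and a: "a < p" and b: "b < m" and n: "n > 0"
    and sr: "spectral_radius (map_mat complex_of_real A) < 1"
  shows "good (\<lambda>k. (C * (A ^\<^sub>m k) * B) $$ (a, b))"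
proof -
  obtain zs where zs: "apl zs (\<lambda>k. complex_of_real ((C * (A ^\<^sub>m k) * B) $$ (a, b))) = (\<lambda>_. 0)"
    using entry_annihilator[OF C A B a b n] by blast
  obtain \<theta>0 c where th: "0 < \<theta>0" "\<theta>0 < 1" "0 \<le> c"
    and bd: "\<And>k i j. i < n \<Longrightarrow> j < n \<Longrightarrow> \<bar>(A ^\<^sub>m k) $$ (i, j)\<bar> \<le> c * \<theta>0 ^ k"
    using pow_entry_bound[OF A n sr] by blast
  define SC where "SC = (\<Sum>j<n. \<bar>C $$ (a, j)\<bar>)"
  define SB where "SB = (\<Sum>l<n. \<bar>B $$ (l, b)\<bar>)"
  have eb: "\<bar>(C * (A ^\<^sub>m k) * B) $$ (a, b)\<bar> \<le> (SC * SB * c) * \<theta>0 ^ k" for k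
  proof -
    have "(C * (A ^\<^sub>m k) * B) = C * (A ^\<^sub>m k * B)" by (rule hankel_entry_CAB[OF C A B])
    then have eq: "(C * (A ^\<^sub>m k) * B) $$ (a, b) = (\<Sum>j<n. C $$ (a, j) * (\<Sum>l<n. (A ^\<^sub>m k) $$ (j, l) * B $$ (l, b)))"
      using entry_CXY[OF C _ B a b, of "A ^\<^sub>m k"] A by simp
    have "\<bar>\<Sum>j<n. C $$ (a, j) * (\<Sum>l<n. (A ^\<^sub>m k) $$ (j, l) * B $$ (l, b))\<bar>
        \<le> (\<Sum>j<n. \<bar>C $$ (a, j)\<bar> * (\<Sum>l<n. (c * \<theta>0 ^ k) * \<bar>B $$ (l, b)\<bar>))"
    proof (rule order_trans[OF sum_abs], rule sum_mono)
      fix j assume j: "j \<in> {..<n}"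
      have "\<bar>\<Sum>l<n. (A ^\<^sub>m k) $$ (j, l) * B $$ (l, b)\<bar> \<le> (\<Sum>l<n. (c * \<theta>0 ^ k) * \<bar>B $$ (l, b)\<bar>)"
      proof (rule order_trans[OF sum_abs], rule sum_mono)
        fix l assume l: "l \<in> {..<n}"
        show "\<bar>(A ^\<^sub>m k) $$ (j, l) * B $$ (l, b)\<bar> \<le> c * \<theta>0 ^ k * \<bar>B $$ (l, b)\<bar>"
          using bd[of j l k] j l by (simp add: abs_mult mult_right_mono)
      qed
      then show "\<bar>C $$ (a, j) * (\<Sum>l<n. (A ^\<^sub>m k) $$ (j, l) * B $$ (l, b))\<bar>
          \<le> \<bar>C $$ (a, j)\<bar> * (\<Sum>l<n. c * \<theta>0 ^ k * \<bar>B $$ (l, b)\<bar>)"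
        by (simp add: abs_mult mult_left_mono)
    qed
    also have "\<dots> = (SC * SB * c) * \<theta>0 ^ k"
      unfolding SC_def SB_def by (simp add: sum_distrib_left sum_distrib_right mult_ac)
    finally show ?thesis using eq by simp
  qed
  show ?thesis by (rule good_intro[OF zs th(1,2) eb])
qed

lemma ev_zero_bound:
  fixes e :: "nat \<Rightarrow> real"
  assumes "\<forall>k\<ge>K. e k = 0" "\<theta> > 0"
  shows "\<exists>M. \<forall>k. \<bar>e k\<bar> \<le> M * \<theta> ^ k"
proof -
  define M where "M = (\<Sum>k<K. \<bar>e k\<bar> / \<theta> ^ k)"
  have "\<bar>e k\<bar> \<le> M * \<theta> ^ k" for k
  proof (cases "k < K")
    case True
    have "\<bar>e k\<bar> / \<theta> ^ k \<le> M" unfolding M_def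
      by (rule member_le_sum) (use True assms(2) in auto)
    then show ?thesis using assms(2) by (simp add: divide_le_eq)
  next
    case False
    have "M \<ge> 0" unfolding M_def using assms(2) by (intro sum_nonneg) auto
    then show ?thesis using False assms by simp
  qed
  then show ?thesis by blast
qed

lemma fam_zero_bound:
  fixes E :: "'i \<Rightarrow> nat \<Rightarrow> real"
  assumes "finite F" "\<forall>y\<in>F. \<forall>k\<ge>K. E y k = 0" "\<theta> > 0"
  shows "\<exists>M. \<forall>y\<in>F. \<forall>k. \<bar>E y k\<bar> \<le> M * \<theta> ^ k"
proof -
  define g where "g k = (\<Sum>y\<in>F. \<bar>E y k\<bar>)" for k
  have "\<forall>k\<ge>K. g k = 0" unfolding g_def using assms(2) by simp
  then obtain M where M: "\<forall>k. \<bar>g k\<bar> \<le> M * \<theta> ^ k" using ev_zero_bound assms(3) by blast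
  have "\<bar>E y k\<bar> \<le> M * \<theta> ^ k" if "y \<in> F" for y k
  proof -
    have "\<bar>E y k\<bar> \<le> g k" unfolding g_def by (rule member_le_sum) (use that assms(1) in auto)
    also have "\<dots> \<le> M * \<theta> ^ k" using M by (metis abs_ge_self order_trans)
    finally show ?thesis .
  qed
  then show ?thesis by blast
qed

lemma fam_union_bound:
  fixes E :: "'i \<Rightarrow> nat \<Rightarrow> real"
  assumes "\<exists>M. \<forall>y\<in>F1. \<forall>k. \<bar>E y k\<bar> \<le> M * \<theta> ^ k" "\<exists>M. \<forall>y\<in>F2. \<forall>k. \<bar>E y k\<bar> \<le> M * \<theta> ^ k"
    "\<theta> > 0"
  shows "\<exists>M. \<forall>y\<in>F1 \<union> F2. \<forall>k. \<bar>E y k\<bar> \<le> M * \<theta> ^ k"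
proof -
  obtain M1 M2 where M1: "\<forall>y\<in>F1. \<forall>k. \<bar>E y k\<bar> \<le> M1 * \<theta> ^ k"
    and M2: "\<forall>y\<in>F2. \<forall>k. \<bar>E y k\<bar> \<le> M2 * \<theta> ^ k" using assms(1,2) by blast
  have "\<bar>E y k\<bar> \<le> max M1 M2 * \<theta> ^ k" if y: "y \<in> F1 \<union> F2" for y k
  proof -
    have m1: "M1 * \<theta> ^ k \<le> max M1 M2 * \<theta> ^ k" using assms(3) by (intro mult_right_mono) simp_all
    have m2: "M2 * \<theta> ^ k \<le> max M1 M2 * \<theta> ^ k" using assms(3) by (intro mult_right_mono) simp_all
    show ?thesis
    proof (cases "y \<in> F1")
      case True
      then have "\<bar>E y k\<bar> \<le> M1 * \<theta> ^ k" using M1 by simp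
      then show ?thesis using m1 by linarith
    next
      case False
      then have "y \<in> F2" using y by simp
      then have "\<bar>E y k\<bar> \<le> M2 * \<theta> ^ k" using M2 by simp
      then show ?thesis using m2 by linarith
    qed
  qed
  then show ?thesis by blast
qed

definition goodset :: "('i \<Rightarrow> nat \<Rightarrow> real) \<Rightarrow> 'i set \<Rightarrow> bool" where
  "goodset E I \<longleftrightarrow> (\<exists>K0. \<forall>x\<in>I. \<forall>k\<ge>K0. E x k = 0) \<or>
     (\<exists>\<sigma>>0. \<sigma> < 1 \<and> (\<exists>c>0. \<exists>N. \<exists>x\<in>I. \<forall>k. \<exists>i\<le>N. c * \<sigma> ^ k \<le> \<bar>E x (k + i)\<bar>) \<and>
        (\<forall>\<theta>>\<sigma>. \<exists>M. \<forall>x\<in>I. \<forall>k. \<bar>E x k\<bar> \<le> M * \<theta> ^ k))"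

lemma goodset_I1: "\<forall>x\<in>I. \<forall>k\<ge>K0. E x k = 0 \<Longrightarrow> goodset E I"
  unfolding goodset_def by (rule disjI1, rule exI[of _ K0])

lemma goodset_I2:
  assumes "\<sigma> > 0" "\<sigma> < 1" "\<exists>c>0. \<exists>N. \<exists>x\<in>I. \<forall>k. \<exists>i\<le>N. c * \<sigma> ^ k \<le> \<bar>E x (k + i)\<bar>"
    "\<forall>\<theta>>\<sigma>. \<exists>M. \<forall>x\<in>I. \<forall>k. \<bar>E x k\<bar> \<le> M * \<theta> ^ k"
  shows "goodset E I"
  unfolding goodset_def apply (rule disjI2) apply (rule exI[of _ \<sigma>]) using assms by simp

lemma wit_insert:
  assumes "\<exists>c>0. \<exists>N. \<exists>y\<in>F. \<forall>k. \<exists>i\<le>N. c * \<sigma> ^ k \<le> \<bar>E y (k + i)\<bar>"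
  shows "\<exists>c>0. \<exists>N. \<exists>y\<in>insert x F. \<forall>k. \<exists>i\<le>N. c * \<sigma> ^ k \<le> \<bar>E y (k + i)\<bar>"
proof -
  obtain c N y where h: "c > 0" "y \<in> F" "\<forall>k. \<exists>i\<le>N. c * \<sigma> ^ k \<le> \<bar>E y (k + i)\<bar>" using assms by blast
  have "y \<in> insert x F" using h(2) by simp
  then have "\<exists>y\<in>insert x F. \<forall>k. \<exists>i\<le>N. c * \<sigma> ^ k \<le> \<bar>E y (k + i)\<bar>" using h(3) by (rule bexI[rotated])
  then show ?thesis using h(1) by (intro exI[of _ c] conjI exI[of _ N])
qed

lemma wit_single:
  assumes "\<exists>c>0. \<exists>N. \<forall>k. \<exists>i\<le>N. c * \<sigma> ^ k \<le> \<bar>E x (k + i)\<bar>"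
  shows "\<exists>c>0. \<exists>N. \<exists>y\<in>insert x F. \<forall>k. \<exists>i\<le>N. c * \<sigma> ^ k \<le> \<bar>E y (k + i)\<bar>"
proof -
  obtain c N where h: "c > 0" "\<forall>k. \<exists>i\<le>N. c * \<sigma> ^ k \<le> \<bar>E x (k + i)\<bar>" using assms by blast
  have "x \<in> insert x F" by simp
  then have "\<exists>y\<in>insert x F. \<forall>k. \<exists>i\<le>N. c * \<sigma> ^ k \<le> \<bar>E y (k + i)\<bar>" using h(2) by (rule bexI[rotated])
  then show ?thesis using h(1) by (intro exI[of _ c] conjI exI[of _ N])
qed

lemma good_cases:
  assumes "good e"
  obtains (z) K where "\<forall>k\<ge>K. e k = 0"
  | (s) \<sigma> where "\<sigma> > 0" "\<sigma> < 1" "\<exists>c>0. \<exists>N. \<forall>k. \<exists>i\<le>N. c * \<sigma> ^ k \<le> \<bar>e (k + i)\<bar>"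
      "\<forall>\<theta>>\<sigma>. \<exists>M. \<forall>k. \<bar>e k\<bar> \<le> M * \<theta> ^ k"
proof -
  from assms[unfolded good_def] show thesis
  proof (rule disjE)
    assume "\<exists>K0. \<forall>k\<ge>K0. e k = 0"
    then obtain K where "\<forall>k\<ge>K. e k = 0" ..
    then show thesis by (rule z)
  next
    assume "\<exists>\<sigma>>0. \<sigma> < 1 \<and> (\<exists>c>0. \<exists>N. \<forall>k. \<exists>i\<le>N. c * \<sigma> ^ k \<le> \<bar>e (k + i)\<bar>) \<and>
        (\<forall>\<theta>>\<sigma>. \<exists>M. \<forall>k. \<bar>e k\<bar> \<le> M * \<theta> ^ k)"
    then obtain \<sigma> where h: "\<sigma> > 0 \<and> \<sigma> < 1 \<and> (\<exists>c>0. \<exists>N. \<forall>k. \<exists>i\<le>N. c * \<sigma> ^ k \<le> \<bar>e (k + i)\<bar>) \<and>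
        (\<forall>\<theta>>\<sigma>. \<exists>M. \<forall>k. \<bar>e k\<bar> \<le> M * \<theta> ^ k)" ..
    show thesis
      by (rule s[OF h[THEN conjunct1] h[THEN conjunct2, THEN conjunct1]
            h[THEN conjunct2, THEN conjunct2, THEN conjunct1] h[THEN conjunct2, THEN conjunct2, THEN conjunct2]])
  qed
qed

lemma goodset_cases:
  assumes "goodset E F"
  obtains (z) K where "\<forall>y\<in>F. \<forall>k\<ge>K. E y k = 0"
  | (s) \<sigma> where "\<sigma> > 0" "\<sigma> < 1" "\<exists>c>0. \<exists>N. \<exists>y\<in>F. \<forall>k. \<exists>i\<le>N. c * \<sigma> ^ k \<le> \<bar>E y (k + i)\<bar>"
      "\<forall>\<theta>>\<sigma>. \<exists>M. \<forall>y\<in>F. \<forall>k. \<bar>E y k\<bar> \<le> M * \<theta> ^ k"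
proof -
  from assms[unfolded goodset_def] show thesis
  proof (rule disjE)
    assume "\<exists>K0. \<forall>y\<in>F. \<forall>k\<ge>K0. E y k = 0"
    then obtain K where "\<forall>y\<in>F. \<forall>k\<ge>K. E y k = 0" ..
    then show thesis by (rule z)
  next
    assume "\<exists>\<sigma>>0. \<sigma> < 1 \<and> (\<exists>c>0. \<exists>N. \<exists>y\<in>F. \<forall>k. \<exists>i\<le>N. c * \<sigma> ^ k \<le> \<bar>E y (k + i)\<bar>) \<and>
        (\<forall>\<theta>>\<sigma>. \<exists>M. \<forall>y\<in>F. \<forall>k. \<bar>E y k\<bar> \<le> M * \<theta> ^ k)"
    then obtain \<sigma> where h: "\<sigma> > 0 \<and> \<sigma> < 1 \<and> (\<exists>c>0. \<exists>N. \<exists>y\<in>F. \<forall>k. \<exists>i\<le>N. c * \<sigma> ^ k \<le> \<bar>E y (k + i)\<bar>) \<and>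
        (\<forall>\<theta>>\<sigma>. \<exists>M. \<forall>y\<in>F. \<forall>k. \<bar>E y k\<bar> \<le> M * \<theta> ^ k)" ..
    show thesis
      by (rule s[OF h[THEN conjunct1] h[THEN conjunct2, THEN conjunct1]
            h[THEN conjunct2, THEN conjunct2, THEN conjunct1] h[THEN conjunct2, THEN conjunct2, THEN conjunct2]])
  qed
qed

lemma goodset_insert:
  assumes gx: "good (E x)" and gF: "goodset E F" and fin: "finite F"
  shows "goodset E (insert x F)"
proof -
  have ins: "insert x F = {x} \<union> F" by simp
  have zb1: "\<exists>M. \<forall>y\<in>{x}. \<forall>k. \<bar>E y k\<bar> \<le> M * \<theta> ^ k" if "\<forall>k\<ge>K. E x k = 0" "\<theta> > 0" for K \<theta>
    using fam_zero_bound[of "{x}" K E \<theta>] that by simp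
  have sb1: "\<exists>M. \<forall>y\<in>{x}. \<forall>k. \<bar>E y k\<bar> \<le> M * \<theta> ^ k" if "\<exists>M. \<forall>k. \<bar>E x k\<bar> \<le> M * \<theta> ^ k" for \<theta>
    using that by simp
  from gx show ?thesis
  proof (cases rule: good_cases)
    case (z K1)
    note z1 = z
    from gF show ?thesis
    proof (cases rule: goodset_cases)
      case (z K0)
      have "\<forall>y\<in>insert x F. \<forall>k\<ge>max K0 K1. E y k = 0" using z z1 by simp
      then show ?thesis by (rule goodset_I1)
    next
      case (s \<sigma>)
      have "\<forall>\<theta>>\<sigma>. \<exists>M. \<forall>y\<in>insert x F. \<forall>k. \<bar>E y k\<bar> \<le> M * \<theta> ^ k"
      proof (intro allI impI)
        fix \<theta> assume th: "\<theta> > \<sigma>"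
        have t0: "\<theta> > 0" using th s(1) by simp
        have b1: "\<exists>M. \<forall>y\<in>{x}. \<forall>k. \<bar>E y k\<bar> \<le> M * \<theta> ^ k" by (rule zb1[OF z1 t0])
        have b2: "\<exists>M. \<forall>y\<in>F. \<forall>k. \<bar>E y k\<bar> \<le> M * \<theta> ^ k" using s(4) th by simp
        show "\<exists>M. \<forall>y\<in>insert x F. \<forall>k. \<bar>E y k\<bar> \<le> M * \<theta> ^ k"
          using fam_union_bound[OF b1 b2 t0] unfolding ins .
      qed
      then show ?thesis by (rule goodset_I2[OF s(1,2) wit_insert[OF s(3)]])
    qed
  next
    case (s \<sigma>1)
    note s1 = s
    have w1: "\<exists>c>0. \<exists>N. \<exists>y\<in>insert x F. \<forall>k. \<exists>i\<le>N. c * \<sigma>1 ^ k \<le> \<bar>E y (k + i)\<bar>"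
      by (rule wit_single[where E=E and x=x and F=F], rule s1(3))
    from gF show ?thesis
    proof (cases rule: goodset_cases)
      case (z K0)
      have "\<forall>\<theta>>\<sigma>1. \<exists>M. \<forall>y\<in>insert x F. \<forall>k. \<bar>E y k\<bar> \<le> M * \<theta> ^ k"
      proof (intro allI impI)
        fix \<theta> assume th: "\<theta> > \<sigma>1"
        have t0: "\<theta> > 0" using th s1(1) by simp
        have b1: "\<exists>M. \<forall>y\<in>{x}. \<forall>k. \<bar>E y k\<bar> \<le> M * \<theta> ^ k" using s1(4) th sb1 by simp
        have b2: "\<exists>M. \<forall>y\<in>F. \<forall>k. \<bar>E y k\<bar> \<le> M * \<theta> ^ k" by (rule fam_zero_bound[OF fin z t0])
        show "\<exists>M. \<forall>y\<in>insert x F. \<forall>k. \<bar>E y k\<bar> \<le> M * \<theta> ^ k"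
          using fam_union_bound[OF b1 b2 t0] unfolding ins .
      qed
      then show ?thesis by (rule goodset_I2[OF s1(1,2) w1])
    next
      case (s \<sigma>2)
      note s2 = s
      define \<sigma> where "\<sigma> = max \<sigma>1 \<sigma>2"
      have up: "\<forall>\<theta>>\<sigma>. \<exists>M. \<forall>y\<in>insert x F. \<forall>k. \<bar>E y k\<bar> \<le> M * \<theta> ^ k"
      proof (intro allI impI)
        fix \<theta> assume th: "\<theta> > \<sigma>"
        have t0: "\<theta> > 0" using th s1(1) unfolding \<sigma>_def by simp
        have b1: "\<exists>M. \<forall>y\<in>{x}. \<forall>k. \<bar>E y k\<bar> \<le> M * \<theta> ^ k" using s1(4) th sb1 unfolding \<sigma>_def by simp
        have b2: "\<exists>M. \<forall>y\<in>F. \<forall>k. \<bar>E y k\<bar> \<le> M * \<theta> ^ k" using s2(4) th unfolding \<sigma>_def by simp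
        show "\<exists>M. \<forall>y\<in>insert x F. \<forall>k. \<bar>E y k\<bar> \<le> M * \<theta> ^ k"
          using fam_union_bound[OF b1 b2 t0] unfolding ins .
      qed
      have w: "\<exists>c>0. \<exists>N. \<exists>y\<in>insert x F. \<forall>k. \<exists>i\<le>N. c * \<sigma> ^ k \<le> \<bar>E y (k + i)\<bar>"
      proof (cases "\<sigma>1 \<le> \<sigma>2")
        case True
        then have "\<sigma> = \<sigma>2" unfolding \<sigma>_def by simp
        then show ?thesis using wit_insert[OF s2(3)] by simp
      next
        case False
        then have "\<sigma> = \<sigma>1" unfolding \<sigma>_def by simp
        then show ?thesis using w1 by simp
      qed
      have "\<sigma> > 0" "\<sigma> < 1" using s1(1,2) s2(1,2) unfolding \<sigma>_def by auto
      then show ?thesis by (rule goodset_I2[OF _ _ w up])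
    qed
  qed
qed

lemma goodset_finite:
  assumes "finite I" "\<And>x. x \<in> I \<Longrightarrow> good (E x)"
  shows "goodset E I"
  using assms
proof (induction I rule: finite_induct)
  case empty then show ?case unfolding goodset_def by auto
next
  case (insert x F)
  have "good (E x)" using insert.prems by simp
  moreover have "goodset E F" using insert.IH insert.prems by simp
  ultimately show ?case by (rule goodset_insert[OF _ _ insert.hyps(1)])
qed

lemma half_lt: "(t::real) < X \<Longrightarrow> 0 < X \<Longrightarrow> t / 2 < X" by linarith

lemma cs_series:
  fixes a b :: "nat \<Rightarrow> real"
  assumes sa: "summable (\<lambda>i. (a i)\<^sup>2)" and sb: "summable (\<lambda>i. (b i)\<^sup>2)"
  shows "summable (\<lambda>i. \<bar>a i * b i\<bar>)"
    and "(\<Sum>i. \<bar>a i * b i\<bar>) \<le> sqrt (\<Sum>i. (a i)\<^sup>2) * sqrt (\<Sum>i. (b i)\<^sup>2)"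
proof -
  define A where "A = (\<Sum>i. (a i)\<^sup>2)"
  define B where "B = (\<Sum>i. (b i)\<^sup>2)"
  have A0: "A \<ge> 0" unfolding A_def by (intro suminf_nonneg sa) simp
  have B0: "B \<ge> 0" unfolding B_def by (intro suminf_nonneg sb) simp
  have pt: "\<bar>a i * b i\<bar> \<le> (t * (a i)\<^sup>2 + (b i)\<^sup>2 / t) / 2" if t: "t > 0" for t i
  proof -
    have "0 \<le> (t * \<bar>a i\<bar> - \<bar>b i\<bar>)\<^sup>2" by simp
    then have "2 * t * \<bar>a i\<bar> * \<bar>b i\<bar> \<le> t\<^sup>2 * (a i)\<^sup>2 + (b i)\<^sup>2"
      by (simp add: power2_eq_square algebra_simps)
    then have "(2 * t * \<bar>a i\<bar> * \<bar>b i\<bar>) / t \<le> (t\<^sup>2 * (a i)\<^sup>2 + (b i)\<^sup>2) / t"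
      using t by (intro divide_right_mono) auto
    moreover have "(2 * t * \<bar>a i\<bar> * \<bar>b i\<bar>) / t = 2 * \<bar>a i * b i\<bar>" using t by (simp add: abs_mult)
    moreover have "(t\<^sup>2 * (a i)\<^sup>2 + (b i)\<^sup>2) / t = t * (a i)\<^sup>2 + (b i)\<^sup>2 / t"
      using t by (simp add: field_simps power2_eq_square)
    ultimately show ?thesis by simp
  qed
  have sumt: "summable (\<lambda>i. (t * (a i)\<^sup>2 + (b i)\<^sup>2 / t) / 2)" for t
    using sa sb by (intro summable_divide summable_add summable_mult summable_divide)
  show s1: "summable (\<lambda>i. \<bar>a i * b i\<bar>)"
    by (rule summable_comparison_test'[OF sumt[of 1]]) (use pt[of 1] in auto)
  define X where "X = (\<Sum>i. \<bar>a i * b i\<bar>)"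
  have X0: "X \<ge> 0" unfolding X_def by (intro suminf_nonneg s1) simp
  have Xt: "X \<le> (t * A + B / t) / 2" if t: "t > 0" for t
  proof -
    have "X \<le> (\<Sum>i. (t * (a i)\<^sup>2 + (b i)\<^sup>2 / t) / 2)"
      unfolding X_def by (rule suminf_le[OF _ s1 sumt]) (use pt t in auto)
    also have "\<dots> = (t * A + B / t) / 2"
    proof -
      have "(\<lambda>i. (t * (a i)\<^sup>2 + (b i)\<^sup>2 / t) / 2) sums ((t * A + B / t) / 2)"
        unfolding A_def B_def
        by (intro sums_divide sums_add sums_mult summable_sums sa sb)
      then show ?thesis by (rule sums_unique[symmetric])
    qed
    finally show ?thesis .
  qed
  have "X \<le> sqrt A * sqrt B"
  proof (cases "A > 0 \<and> B > 0")
    case True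
    define t where "t = sqrt B / sqrt A"
    have tp: "t > 0" unfolding t_def using True by simp
    have "(t * A + B / t) / 2 = sqrt A * sqrt B"
      unfolding t_def using True
      by (simp add: field_simps)
    then show ?thesis using Xt[OF tp] by simp
  next
    case False
    then have z: "A = 0 \<or> B = 0" using A0 B0 by auto
    have "X \<le> 0"
    proof (rule ccontr)
      assume "\<not> X \<le> 0"
      then have Xp: "X > 0" by simp
      show False
      proof (cases "A = 0")
        case True
        define t where "t = (B + 1) / X"
        have tp: "t > 0" unfolding t_def using Xp B0 by simp
        have "X \<le> B / t / 2" using Xt[OF tp] True by simp
        also have "\<dots> = B * X / (B + 1) / 2" unfolding t_def using Xp B0 by (simp add: field_simps)
        also have "\<dots> < X"
        proof -
          have "B / (B + 1) < 1" using B0 by simp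
          then have "(B / (B + 1)) * X < 1 * X" using Xp by (intro mult_strict_right_mono) auto
          then have "B * X / (B + 1) < X" by simp
          then show ?thesis using Xp by (rule half_lt)
        qed
        finally show False by simp
      next
        case False
        then have B: "B = 0" using z by simp
        define t where "t = X / (A + 1)"
        have tp: "t > 0" unfolding t_def using Xp A0 by simp
        have "X \<le> t * A / 2" using Xt[OF tp] B by simp
        also have "\<dots> = X * A / (A + 1) / 2" unfolding t_def by simp
        also have "\<dots> < X"
        proof -
          have "A / (A + 1) < 1" using A0 by simp
          then have "(A / (A + 1)) * X < 1 * X" using Xp by (intro mult_strict_right_mono) auto
          then have "X * A / (A + 1) < X" by (simp add: mult.commute)
          then show ?thesis using Xp by (rule half_lt)
        qed
        finally show False by simp
      qed
    qed
    moreover have "0 \<le> sqrt A * sqrt B" using A0 B0 by simp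
    ultimately show ?thesis by linarith
  qed
  then show "(\<Sum>i. \<bar>a i * b i\<bar>) \<le> sqrt (\<Sum>i. (a i)\<^sup>2) * sqrt (\<Sum>i. (b i)\<^sup>2)"
    unfolding X_def A_def B_def .
qed

definition l2set :: "(nat \<Rightarrow> nat \<Rightarrow> real) \<Rightarrow> real set" where
  "l2set K = {sqrt (\<Sum>i. (\<Sum>j. K i j * x j)\<^sup>2) | x.
                        summable (\<lambda>j. (x j)\<^sup>2) \<and> (\<Sum>j. (x j)\<^sup>2) \<le> 1}"

lemma l2_opnorm_l2set: "l2_opnorm K = Sup (l2set K)"
  unfolding l2_opnorm_def l2set_def ..

lemma opnorm_elem_bound:
  fixes K :: "nat \<Rightarrow> nat \<Rightarrow> real" and u1 v1 u2 v2 x :: "nat \<Rightarrow> real"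
  assumes nn: "\<And>i. u1 i \<ge> 0" "\<And>i. v1 i \<ge> 0" "\<And>i. u2 i \<ge> 0" "\<And>i. v2 i \<ge> 0"
    and su: "summable (\<lambda>i. (u1 i)\<^sup>2)" "summable (\<lambda>i. (v1 i)\<^sup>2)" "summable (\<lambda>i. (u2 i)\<^sup>2)" "summable (\<lambda>i. (v2 i)\<^sup>2)"
    and bd: "\<And>i j. \<bar>K i j\<bar> \<le> u1 i * v1 j + u2 i * v2 j"
    and sx: "summable (\<lambda>j. (x j)\<^sup>2)" and x1: "(\<Sum>j. (x j)\<^sup>2) \<le> 1"
  shows "sqrt (\<Sum>i. (\<Sum>j. K i j * x j)\<^sup>2)
           \<le> sqrt (\<Sum>i. (u1 i)\<^sup>2) * sqrt (\<Sum>i. (v1 i)\<^sup>2) + sqrt (\<Sum>i. (u2 i)\<^sup>2) * sqrt (\<Sum>i. (v2 i)\<^sup>2)"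
proof -
  define a where "a = sqrt (\<Sum>i. (v1 i)\<^sup>2)"
  define b where "b = sqrt (\<Sum>i. (v2 i)\<^sup>2)"
  define U1 where "U1 = (\<Sum>i. (u1 i)\<^sup>2)"
  define U2 where "U2 = (\<Sum>i. (u2 i)\<^sup>2)"
  have "(\<Sum>i. (v1 i)\<^sup>2) \<ge> 0" "(\<Sum>i. (v2 i)\<^sup>2) \<ge> 0" by (intro suminf_nonneg su; simp)+
  then have a0: "a \<ge> 0" and b0: "b \<ge> 0" unfolding a_def b_def by simp_all
  have U10: "U1 \<ge> 0" unfolding U1_def by (intro suminf_nonneg su) simp
  have U20: "U2 \<ge> 0" unfolding U2_def by (intro suminf_nonneg su) simp
  have sx1: "sqrt (\<Sum>j. (x j)\<^sup>2) \<le> 1" using x1 by simp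
  have s1: "summable (\<lambda>j. \<bar>v1 j * x j\<bar>)" by (rule cs_series(1)[OF su(2) sx])
  have s2: "summable (\<lambda>j. \<bar>v2 j * x j\<bar>)" by (rule cs_series(1)[OF su(4) sx])
  have S1: "(\<Sum>j. \<bar>v1 j * x j\<bar>) \<le> a"
  proof -
    have "(\<Sum>j. \<bar>v1 j * x j\<bar>) \<le> a * sqrt (\<Sum>j. (x j)\<^sup>2)"
      unfolding a_def by (rule cs_series(2)[OF su(2) sx])
    also have "\<dots> \<le> a * 1" using sx1 a0 by (intro mult_left_mono) auto
    finally show ?thesis by simp
  qed
  have S2: "(\<Sum>j. \<bar>v2 j * x j\<bar>) \<le> b"
  proof -
    have "(\<Sum>j. \<bar>v2 j * x j\<bar>) \<le> b * sqrt (\<Sum>j. (x j)\<^sup>2)"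
      unfolding b_def by (rule cs_series(2)[OF su(4) sx])
    also have "\<dots> \<le> b * 1" using sx1 b0 by (intro mult_left_mono) auto
    finally show ?thesis by simp
  qed
  have ptw: "\<bar>K i j * x j\<bar> \<le> u1 i * \<bar>v1 j * x j\<bar> + u2 i * \<bar>v2 j * x j\<bar>" for i j
  proof -
    have "\<bar>K i j * x j\<bar> = \<bar>K i j\<bar> * \<bar>x j\<bar>" by (simp add: abs_mult)
    also have "\<dots> \<le> (u1 i * v1 j + u2 i * v2 j) * \<bar>x j\<bar>" using bd by (intro mult_right_mono) auto
    also have "\<dots> = u1 i * \<bar>v1 j * x j\<bar> + u2 i * \<bar>v2 j * x j\<bar>"
      using nn by (simp add: abs_mult distrib_right)
    finally show ?thesis .
  qed
  have sdom: "summable (\<lambda>j. u1 i * \<bar>v1 j * x j\<bar> + u2 i * \<bar>v2 j * x j\<bar>)" for i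
    using s1 s2 by (intro summable_add summable_mult)
  have sabs: "summable (\<lambda>j. \<bar>K i j * x j\<bar>)" for i
    by (rule summable_comparison_test'[OF sdom]) (use ptw in auto)
  have srow: "summable (\<lambda>j. K i j * x j)" for i
    using sabs[of i] by (rule summable_rabs_cancel)
  define r where "r i = (\<Sum>j. K i j * x j)" for i
  have rb: "\<bar>r i\<bar> \<le> u1 i * a + u2 i * b" for i
  proof -
    have "\<bar>r i\<bar> \<le> (\<Sum>j. \<bar>K i j * x j\<bar>)" unfolding r_def by (rule summable_rabs[OF sabs])
    also have "\<dots> \<le> (\<Sum>j. u1 i * \<bar>v1 j * x j\<bar> + u2 i * \<bar>v2 j * x j\<bar>)"
      by (rule suminf_le[OF ptw sabs sdom])
    also have "\<dots> = u1 i * (\<Sum>j. \<bar>v1 j * x j\<bar>) + u2 i * (\<Sum>j. \<bar>v2 j * x j\<bar>)"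
      using s1 s2 by (simp add: suminf_add[symmetric] summable_mult suminf_mult)
    also have "\<dots> \<le> u1 i * a + u2 i * b"
      using S1 S2 nn by (intro add_mono mult_left_mono) auto
    finally show ?thesis .
  qed
  have su12: "summable (\<lambda>i. \<bar>u1 i * u2 i\<bar>)" by (rule cs_series(1)[OF su(1) su(3)])
  have cs12: "(\<Sum>i. \<bar>u1 i * u2 i\<bar>) \<le> sqrt U1 * sqrt U2"
    unfolding U1_def U2_def by (rule cs_series(2)[OF su(1) su(3)])
  have eqf: "(u1 i * a + u2 i * b)\<^sup>2 = a\<^sup>2 * (u1 i)\<^sup>2 + b\<^sup>2 * (u2 i)\<^sup>2 + (2 * a * b) * \<bar>u1 i * u2 i\<bar>" for i
    using nn[of i] a0 b0 by (simp add: power2_eq_square algebra_simps abs_mult)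
  have sdom2: "summable (\<lambda>i. (u1 i * a + u2 i * b)\<^sup>2)"
    unfolding eqf using su su12 by (intro summable_add summable_mult)
  have rb2: "(r i)\<^sup>2 \<le> (u1 i * a + u2 i * b)\<^sup>2" for i
    using rb[of i] by (metis abs_ge_zero abs_le_square_iff abs_of_nonneg order_trans)
  have sr: "summable (\<lambda>i. (r i)\<^sup>2)"
    by (rule summable_comparison_test'[OF sdom2]) (use rb2 in auto)
  have "(\<Sum>i. (r i)\<^sup>2) \<le> (\<Sum>i. (u1 i * a + u2 i * b)\<^sup>2)" by (rule suminf_le[OF rb2 sr sdom2])
  also have "\<dots> = a\<^sup>2 * U1 + b\<^sup>2 * U2 + (2 * a * b) * (\<Sum>i. \<bar>u1 i * u2 i\<bar>)"
  proof -
    have "(\<lambda>i. (u1 i * a + u2 i * b)\<^sup>2) sums (a\<^sup>2 * U1 + b\<^sup>2 * U2 + (2 * a * b) * (\<Sum>i. \<bar>u1 i * u2 i\<bar>))"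
      unfolding eqf U1_def U2_def
      by (intro sums_add sums_mult summable_sums su su12)
    then show ?thesis by (rule sums_unique[symmetric])
  qed
  also have "\<dots> \<le> a\<^sup>2 * U1 + b\<^sup>2 * U2 + (2 * a * b) * (sqrt U1 * sqrt U2)"
    using cs12 a0 b0 by (intro add_left_mono mult_left_mono) auto
  also have "\<dots> = (sqrt U1 * a + sqrt U2 * b)\<^sup>2"
    using U10 U20 by (simp add: power2_eq_square algebra_simps real_sqrt_mult[symmetric])
  finally have "(\<Sum>i. (r i)\<^sup>2) \<le> (sqrt U1 * a + sqrt U2 * b)\<^sup>2" .
  then have "sqrt (\<Sum>i. (r i)\<^sup>2) \<le> sqrt ((sqrt U1 * a + sqrt U2 * b)\<^sup>2)"
    by (rule real_sqrt_le_mono)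
  also have "\<dots> = sqrt U1 * a + sqrt U2 * b" using U10 U20 a0 b0 by simp
  finally have "sqrt (\<Sum>i. (r i)\<^sup>2) \<le> sqrt U1 * a + sqrt U2 * b" .
  then show ?thesis unfolding r_def U1_def U2_def a_def b_def .
qed

lemma l2set_nonempty: "0 \<in> l2set K"
  unfolding l2set_def mem_Collect_eq by (intro exI[of _ "\<lambda>_. 0"]) simp

lemma opnorm_upper:
  fixes K :: "nat \<Rightarrow> nat \<Rightarrow> real" and u1 v1 u2 v2 :: "nat \<Rightarrow> real"
  assumes nn: "\<And>i. u1 i \<ge> 0" "\<And>i. v1 i \<ge> 0" "\<And>i. u2 i \<ge> 0" "\<And>i. v2 i \<ge> 0"
    and su: "summable (\<lambda>i. (u1 i)\<^sup>2)" "summable (\<lambda>i. (v1 i)\<^sup>2)" "summable (\<lambda>i. (u2 i)\<^sup>2)" "summable (\<lambda>i. (v2 i)\<^sup>2)"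
    and bd: "\<And>i j. \<bar>K i j\<bar> \<le> u1 i * v1 j + u2 i * v2 j"
  shows "l2_opnorm K \<le> sqrt (\<Sum>i. (u1 i)\<^sup>2) * sqrt (\<Sum>i. (v1 i)\<^sup>2) + sqrt (\<Sum>i. (u2 i)\<^sup>2) * sqrt (\<Sum>i. (v2 i)\<^sup>2)"
    and "bdd_above (l2set K)"
proof -
  define Bd where "Bd = sqrt (\<Sum>i. (u1 i)\<^sup>2) * sqrt (\<Sum>i. (v1 i)\<^sup>2) + sqrt (\<Sum>i. (u2 i)\<^sup>2) * sqrt (\<Sum>i. (v2 i)\<^sup>2)"
  have el: "y \<le> Bd" if yin: "y \<in> l2set K" for y
  proof -
    obtain x where y: "y = sqrt (\<Sum>i. (\<Sum>j. K i j * x j)\<^sup>2)" and sx: "summable (\<lambda>j. (x j)\<^sup>2)"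
      and x1: "(\<Sum>j. (x j)\<^sup>2) \<le> 1"
      using yin unfolding l2set_def by blast
    show ?thesis unfolding y Bd_def by (rule opnorm_elem_bound[OF nn su bd sx x1])
  qed
  show "bdd_above (l2set K)" using el by (intro bdd_aboveI) blast
  have "Sup (l2set K) \<le> Bd" using l2set_nonempty el by (intro cSup_least) blast+
  then show "l2_opnorm K \<le> Bd" unfolding l2_opnorm_l2set .
qed

lemma opnorm_col_lower:
  fixes K :: "nat \<Rightarrow> nat \<Rightarrow> real"
  assumes bdd: "bdd_above (l2set K)" and sc: "summable (\<lambda>i. (K i c)\<^sup>2)"
  shows "\<bar>K r c\<bar> \<le> l2_opnorm K"
proof -
  define x where "x j = (if j = c then 1 else 0::real)" for j
  have xs: "(\<lambda>j. (x j)\<^sup>2) sums 1"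
  proof -
    have "(\<lambda>j. (x j)\<^sup>2) = (\<lambda>j. if j = c then (\<lambda>_. 1::real) j else 0)" unfolding x_def by auto
    then show ?thesis using sums_single[of c "\<lambda>_. 1::real"] by simp
  qed
  have rs: "(\<Sum>j. K i j * x j) = K i c" for i
  proof -
    have "(\<lambda>j. K i j * x j) = (\<lambda>j. if j = c then K i j else 0)" unfolding x_def by auto
    then show ?thesis using sums_single[of c "K i"] sums_unique by metis
  qed
  have "sqrt (\<Sum>i. (K i c)\<^sup>2) \<in> l2set K"
  proof -
    have "sqrt (\<Sum>i. (K i c)\<^sup>2) = sqrt (\<Sum>i. (\<Sum>j. K i j * x j)\<^sup>2)" unfolding rs ..
    moreover have "summable (\<lambda>j. (x j)\<^sup>2) \<and> (\<Sum>j. (x j)\<^sup>2) \<le> 1"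
      using xs sums_summable sums_unique by fastforce
    ultimately show ?thesis unfolding l2set_def mem_Collect_eq by (intro exI[of _ x]) simp
  qed
  then have le: "sqrt (\<Sum>i. (K i c)\<^sup>2) \<le> l2_opnorm K"
    unfolding l2_opnorm_l2set by (rule cSup_upper[OF _ bdd])
  have "(K r c)\<^sup>2 \<le> (\<Sum>i. (K i c)\<^sup>2)"
    using sum_le_suminf[OF sc, of "{r}"] by simp
  then have "sqrt ((K r c)\<^sup>2) \<le> sqrt (\<Sum>i. (K i c)\<^sup>2)" by (rule real_sqrt_le_mono)
  then show ?thesis using le by simp
qed

lemma col_summable:
  fixes K :: "nat \<Rightarrow> nat \<Rightarrow> real" and u1 v1 u2 v2 :: "nat \<Rightarrow> real"
  assumes su: "summable (\<lambda>i. (u1 i)\<^sup>2)" "summable (\<lambda>i. (u2 i)\<^sup>2)"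
    and bd: "\<And>i j. \<bar>K i j\<bar> \<le> u1 i * v1 j + u2 i * v2 j"
  shows "summable (\<lambda>i. (K i c)\<^sup>2)"
proof -
  have pt: "(K i c)\<^sup>2 \<le> 2 * (v1 c)\<^sup>2 * (u1 i)\<^sup>2 + 2 * (v2 c)\<^sup>2 * (u2 i)\<^sup>2" for i
  proof -
    have "(K i c)\<^sup>2 \<le> (u1 i * v1 c + u2 i * v2 c)\<^sup>2"
      using bd[of i c] by (metis abs_ge_zero abs_le_square_iff abs_of_nonneg order_trans abs_ge_self)
    also have "\<dots> \<le> 2 * (v1 c)\<^sup>2 * (u1 i)\<^sup>2 + 2 * (v2 c)\<^sup>2 * (u2 i)\<^sup>2"
    proof -
      have "0 \<le> (u1 i * v1 c - u2 i * v2 c)\<^sup>2" by simp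
      then show ?thesis by (simp add: power2_eq_square algebra_simps)
    qed
    finally show ?thesis .
  qed
  have sg: "summable (\<lambda>i. 2 * (v1 c)\<^sup>2 * (u1 i)\<^sup>2 + 2 * (v2 c)\<^sup>2 * (u2 i)\<^sup>2)"
    using su by (intro summable_add summable_mult)
  show ?thesis by (rule summable_comparison_test'[OF sg]) (use pt in auto)
qed

lemma div_pow_summable:
  fixes \<beta> :: real
  assumes b: "0 < \<beta>" "\<beta> < 1" and q: "q > 0"
  shows "summable (\<lambda>i. (\<beta> ^ (i div q))\<^sup>2)"
proof -
  define \<eta> where "\<eta> = root q \<beta>"
  have e0: "0 < \<eta>" and e1: "\<eta> < 1" unfolding \<eta>_def using b q by auto
  have eq: "\<eta> ^ q = \<beta>" unfolding \<eta>_def using b q by simp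
  have le: "\<beta> ^ (i div q) \<le> \<eta> ^ i / \<beta>" for i
  proof -
    have "\<eta> ^ i = \<eta> ^ (q * (i div q) + i mod q)" by simp
    also have "\<dots> = \<beta> ^ (i div q) * \<eta> ^ (i mod q)" by (simp only: power_add power_mult eq)
    finally have ei: "\<eta> ^ i = \<beta> ^ (i div q) * \<eta> ^ (i mod q)" .
    have "\<eta> ^ q \<le> \<eta> ^ (i mod q)" using e0 e1 q by (intro power_decreasing) auto
    then have "\<beta> ^ (i div q) * \<beta> \<le> \<beta> ^ (i div q) * \<eta> ^ (i mod q)" using eq b by (intro mult_left_mono) auto
    then have "\<beta> ^ (i div q) * \<beta> \<le> \<eta> ^ i" using ei by simp
    then show ?thesis using b by (simp add: field_simps)
  qed
  have pt: "(\<beta> ^ (i div q))\<^sup>2 \<le> (1 / \<beta>\<^sup>2) * (\<eta>\<^sup>2) ^ i" for i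
  proof -
    have "(\<beta> ^ (i div q))\<^sup>2 \<le> (\<eta> ^ i / \<beta>)\<^sup>2" using le[of i] b by (intro power_mono) auto
    then show ?thesis by (simp add: power_divide power_mult_distrib power_mult[symmetric] mult.commute)
  qed
  have sg: "summable (\<lambda>i. (1 / \<beta>\<^sup>2) * (\<eta>\<^sup>2) ^ i)"
    using e0 e1 by (intro summable_mult summable_geometric) (simp add: abs_less_iff power_less_one_iff)
  show ?thesis by (rule summable_comparison_test'[OF sg]) (use pt in auto)
qed

definition Kd :: "real mat \<Rightarrow> real mat \<Rightarrow> real mat \<Rightarrow> nat \<Rightarrow> nat \<Rightarrow> nat \<Rightarrow> real" where
  "Kd C A B d = (\<lambda>r c. hankel_fin C A B d d r c - hankel_entry C A B r c)"

lemma Kd_eq: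
  assumes C: "C \<in> carrier_mat p n" and B: "B \<in> carrier_mat n m"
  shows "Kd C A B d r c = (if r div p < d \<and> c div m < d then 0
            else - (C * (A ^\<^sub>m (r div p + c div m)) * B) $$ (r mod p, c mod m))"
  using C B unfolding Kd_def hankel_fin_def hankel_entry_def Let_def by auto

lemma hankel_up:
  fixes C A B :: "real mat"
  assumes C: "C \<in> carrier_mat p n" and B: "B \<in> carrier_mat n m" and p: "p > 0" and m: "m > 0"
    and th: "0 < \<theta>1" "\<theta>1 < \<theta>" "\<theta> < 1" and M0: "M \<ge> 0"
    and eb: "\<And>a b k. a < p \<Longrightarrow> b < m \<Longrightarrow> \<bar>(C * (A ^\<^sub>m k) * B) $$ (a, b)\<bar> \<le> M * \<theta>1 ^ k"
  shows "\<exists>M'. \<forall>d. l2_opnorm (Kd C A B d) \<le> M' * \<theta> ^ d"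
    and "bdd_above (l2set (Kd C A B d))"
    and "summable (\<lambda>i. (Kd C A B d i c)\<^sup>2)"
proof -
  define \<psi> where "\<psi> = \<theta>1 / \<theta>"
  have ps: "0 < \<psi>" "\<psi> < 1" unfolding \<psi>_def using th by auto
  have th0: "\<theta> > 0" using th by simp
  define u1 where "u1 d r = M * \<theta> ^ d * \<psi> ^ (r div p)" for d r
  define v1 where "v1 c = \<theta>1 ^ (c div m)" for c
  define u2 where "u2 r = \<theta>1 ^ (r div p)" for r
  define v2 where "v2 d c = M * \<theta> ^ d * \<psi> ^ (c div m)" for d c
  have nn: "u1 d i \<ge> 0" "v1 i \<ge> 0" "u2 i \<ge> 0" "v2 d i \<ge> 0" for d i
    unfolding u1_def v1_def u2_def v2_def using M0 th ps by auto
  have pr1: "u1 d r * v1 c \<ge> 0" and pr2: "u2 r * v2 d c \<ge> 0" for d r c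
    using nn by simp_all
  have Zp: "summable (\<lambda>i. (\<psi> ^ (i div p))\<^sup>2)" by (rule div_pow_summable[OF ps p])
  have Zm: "summable (\<lambda>i. (\<psi> ^ (i div m))\<^sup>2)" by (rule div_pow_summable[OF ps m])
  have Z1p: "summable (\<lambda>i. (\<theta>1 ^ (i div p))\<^sup>2)" using th by (intro div_pow_summable[OF _ _ p]) auto
  have Z1m: "summable (\<lambda>i. (\<theta>1 ^ (i div m))\<^sup>2)" using th by (intro div_pow_summable[OF _ _ m]) auto
  have eqsq: "(M * \<theta> ^ d * \<psi> ^ (i div q))\<^sup>2 = (M * \<theta> ^ d)\<^sup>2 * (\<psi> ^ (i div q))\<^sup>2" for d i q
    by (simp add: power_mult_distrib)
  have su: "summable (\<lambda>i. (u1 d i)\<^sup>2)" "summable (\<lambda>i. (v1 i)\<^sup>2)" "summable (\<lambda>i. (u2 i)\<^sup>2)"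
    "summable (\<lambda>i. (v2 d i)\<^sup>2)" for d
    unfolding u1_def v1_def u2_def v2_def eqsq using Zp Zm Z1p Z1m by (auto intro: summable_mult)
  have pw: "\<theta>1 ^ k \<le> \<theta> ^ d * \<psi> ^ k" if "d \<le> k" for d k
  proof -
    have "\<theta>1 ^ k = \<theta> ^ k * \<psi> ^ k" unfolding \<psi>_def using th0 by (simp add: power_divide)
    also have "\<dots> \<le> \<theta> ^ d * \<psi> ^ k" using that th ps by (intro mult_right_mono power_decreasing) auto
    finally show ?thesis .
  qed
  have bd: "\<bar>Kd C A B d r c\<bar> \<le> u1 d r * v1 c + u2 r * v2 d c" for d r c
  proof (cases "r div p < d \<and> c div m < d")
    case True
    then show ?thesis unfolding Kd_eq[OF C B] using pr1[of d r c] pr2[of r d c] by simp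
  next
    case False
    have "\<bar>Kd C A B d r c\<bar> = \<bar>(C * (A ^\<^sub>m (r div p + c div m)) * B) $$ (r mod p, c mod m)\<bar>"
      unfolding Kd_eq[OF C B] using False by (simp only: if_False abs_minus_cancel)
    also have "\<dots> \<le> M * \<theta>1 ^ (r div p + c div m)" using p m by (intro eb) auto
    also have "\<dots> = M * \<theta>1 ^ (r div p) * \<theta>1 ^ (c div m)" by (simp add: power_add)
    also have "\<dots> \<le> u1 d r * v1 c + u2 r * v2 d c"
    proof (cases "d \<le> r div p")
      case True
      have "M * \<theta>1 ^ (r div p) * \<theta>1 ^ (c div m) \<le> M * (\<theta> ^ d * \<psi> ^ (r div p)) * \<theta>1 ^ (c div m)"
        using pw[OF True] M0 th by (intro mult_right_mono mult_left_mono) auto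
      also have "\<dots> = u1 d r * v1 c" unfolding u1_def v1_def by (simp add: mult_ac)
      finally show ?thesis using pr2[of r d c] by linarith
    next
      case False': False
      then have c: "d \<le> c div m" using False by auto
      have "M * \<theta>1 ^ (r div p) * \<theta>1 ^ (c div m) \<le> M * \<theta>1 ^ (r div p) * (\<theta> ^ d * \<psi> ^ (c div m))"
        using pw[OF c] M0 th by (intro mult_left_mono) auto
      also have "\<dots> = u2 r * v2 d c" unfolding u2_def v2_def by (simp add: mult_ac)
      finally show ?thesis using pr1[of d r c] by linarith
    qed
    finally show ?thesis .
  qed
  show "bdd_above (l2set (Kd C A B d))"
    by (rule opnorm_upper(2)[OF nn(1)[of d] nn(2) nn(3) nn(4)[of d] su(1)[of d] su(2) su(3) su(4)[of d] bd])
  show "summable (\<lambda>i. (Kd C A B d i c)\<^sup>2)"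
    by (rule col_summable[OF su(1)[of d] su(3) bd])
  define Sp where "Sp = (\<Sum>i. (\<psi> ^ (i div p))\<^sup>2)"
  define Sm where "Sm = (\<Sum>i. (\<psi> ^ (i div m))\<^sup>2)"
  define S1p where "S1p = (\<Sum>i. (\<theta>1 ^ (i div p))\<^sup>2)"
  define S1m where "S1m = (\<Sum>i. (\<theta>1 ^ (i div m))\<^sup>2)"
  define M' where "M' = M * (sqrt Sp * sqrt S1m + sqrt S1p * sqrt Sm)"
  have "l2_opnorm (Kd C A B d) \<le> M' * \<theta> ^ d" for d
  proof -
    have e1: "(\<Sum>i. (u1 d i)\<^sup>2) = (M * \<theta> ^ d)\<^sup>2 * Sp"
      unfolding u1_def eqsq Sp_def by (rule suminf_mult[OF Zp])
    have e2: "(\<Sum>i. (v2 d i)\<^sup>2) = (M * \<theta> ^ d)\<^sup>2 * Sm"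
      unfolding v2_def eqsq Sm_def by (rule suminf_mult[OF Zm])
    have Mt: "M * \<theta> ^ d \<ge> 0" using M0 th0 by simp
    have "l2_opnorm (Kd C A B d) \<le> sqrt (\<Sum>i. (u1 d i)\<^sup>2) * sqrt (\<Sum>i. (v1 i)\<^sup>2) + sqrt (\<Sum>i. (u2 i)\<^sup>2) * sqrt (\<Sum>i. (v2 d i)\<^sup>2)"
      by (rule opnorm_upper(1)[OF nn(1)[of d] nn(2) nn(3) nn(4)[of d] su(1)[of d] su(2) su(3) su(4)[of d] bd])
    also have "\<dots> = (M * \<theta> ^ d) * sqrt Sp * sqrt S1m + sqrt S1p * ((M * \<theta> ^ d) * sqrt Sm)"
      unfolding e1 e2 using Mt unfolding v1_def u2_def S1m_def S1p_def by (simp add: real_sqrt_mult)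
    also have "\<dots> = M' * \<theta> ^ d" unfolding M'_def by (simp add: algebra_simps)
    finally show ?thesis .
  qed
  then show "\<exists>M'. \<forall>d. l2_opnorm (Kd C A B d) \<le> M' * \<theta> ^ d" by blast
qed

lemma nat_Inf_le: "(x::nat) \<in> X \<Longrightarrow> Inf X \<le> x"
  by (simp add: Inf_nat_def Least_le)

lemma asym_L:
  assumes "K > 0" "c > 0" "b > 0" "l > 0" "k2 > 0"
  shows "eventually (\<lambda>t::real. K * sqrt (ln t / l) * sqrt ((b * ln t + Q) * k2 / t) < c * t powr (-0.475)) at_top"
  using assms by real_asymp

lemma asym_C:
  assumes "l > 0" shows "eventually (\<lambda>t::real. (q + ln t / 2) / 0.9 + 2 * l \<le> 2.5 * 0.95 * ln t / 2) at_top"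
  using assms by real_asymp

lemma asym_Q: "eventually (\<lambda>t::real. q + ln t / 2 \<ge> 0) at_top"
  by real_asymp

lemma asym_Z: "((\<lambda>t::real. sqrt ((a + ln t) / t)) \<longlongrightarrow> 0) at_top"
  by real_asymp

lemma F_tendsto0:
  assumes "\<delta> > 0"
  shows "((\<lambda>t. K0 * sqrt (real d) * sqrt ((p * real d + ln (t / \<delta>)) / t)) \<longlongrightarrow> 0) at_top"
proof -
  have ev: "eventually (\<lambda>t. K0 * sqrt (real d) * sqrt ((p * real d - ln \<delta> + ln t) / t)
      = K0 * sqrt (real d) * sqrt ((p * real d + ln (t / \<delta>)) / t)) at_top"
    using eventually_gt_at_top[of 0]
    by eventually_elim (use assms in \<open>simp add: ln_div algebra_simps\<close>)
  have "((\<lambda>t. K0 * sqrt (real d) * sqrt ((p * real d - ln \<delta> + ln t) / t)) \<longlongrightarrow> K0 * sqrt (real d) * 0) at_top"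
    by (intro tendsto_mult tendsto_const asym_Z)
  then show ?thesis using ev by (simp add: tendsto_cong)
qed

lemma final_Z:
  fixes g :: "nat \<Rightarrow> real"
  assumes dl: "\<delta> > 0" and g0: "\<And>d. g d \<ge> 0" and D0: "D0 \<ge> 1" "g D0 = 0"
    and p0: "p \<ge> 0" and K0: "K0 \<ge> 0"
  shows "\<exists>D\<ge>1. eventually (\<lambda>t. Inf {d. 1 \<le> d \<and> g d \<le> K0 * sqrt (real d) * sqrt ((p * real d + ln (t / \<delta>)) / t)} = D) at_top"
proof -
  define F where "F d t = K0 * sqrt (real d) * sqrt ((p * real d + ln (t / \<delta>)) / t)" for d t
  define D where "D = (LEAST d. 1 \<le> d \<and> g d = 0)"
  have D: "1 \<le> D \<and> g D = 0" unfolding D_def by (rule LeastI[of _ D0]) (use D0 in simp)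
  have gpos: "g d > 0" if "1 \<le> d" "d < D" for d
  proof -
    have "\<not> (1 \<le> d \<and> g d = 0)" using not_less_Least[of d "\<lambda>d. 1 \<le> d \<and> g d = 0"] that
      unfolding D_def by blast
    then show ?thesis using g0[of d] that by linarith
  qed
  have ev1: "eventually (\<lambda>t. \<forall>d\<in>{1..<D}. F d t < g d) at_top"
  proof (rule eventually_ball_finite)
    show "\<forall>d\<in>{1..<D}. eventually (\<lambda>t. F d t < g d) at_top"
    proof
      fix d assume "d \<in> {1..<D}"
      then have "g d > 0" using gpos by auto
      moreover have "(F d \<longlongrightarrow> 0) at_top" unfolding F_def by (rule F_tendsto0[OF dl])
      ultimately show "eventually (\<lambda>t. F d t < g d) at_top" by (simp add: order_tendstoD(2))
    qed
  qed simp
  have ev2: "eventually (\<lambda>t. t \<ge> \<delta>) at_top" by (rule eventually_ge_at_top)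
  have "eventually (\<lambda>t. Inf {d. 1 \<le> d \<and> g d \<le> F d t} = D) at_top"
    using ev1 ev2
  proof eventually_elim
    case (elim t)
    let ?S = "{d. 1 \<le> d \<and> g d \<le> F d t}"
    have tp: "t > 0" using elim(2) dl by simp
    have "ln (t / \<delta>) \<ge> 0" using elim(2) dl by simp
    then have "F D t \<ge> 0" unfolding F_def using p0 K0 tp by (intro mult_nonneg_nonneg) auto
    then have DS: "D \<in> ?S" using D by simp
    then have "?S \<noteq> {}" by blast
    then have IS: "Inf ?S \<in> ?S" by (rule Inf_nat_def1)
    have "Inf ?S \<le> D" by (rule nat_Inf_le[OF DS])
    moreover have "\<not> Inf ?S < D"
    proof
      assume "Inf ?S < D"
      then have "F (Inf ?S) t < g (Inf ?S)" using elim(1) IS by auto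
      then show False using IS by simp
    qed
    ultimately show ?case by simp
  qed
  then show ?thesis using D unfolding F_def by blast
qed

lemma pow_exp: "(x::real) > 0 \<Longrightarrow> x ^ d = exp (real d * ln x)"
  by (simp add: exp_ln ln_realpow[symmetric])

lemma sqrt_exp: "(t::real) > 0 \<Longrightarrow> sqrt t = exp (ln t / 2)"
proof -
  assume t: "t > 0"
  have "exp (ln t / 2) ^ 2 = t" using t by (simp add: exp_ln power2_eq_square exp_add[symmetric])
  then show ?thesis by (metis exp_gt_zero less_eq_real_def real_sqrt_unique)
qed

lemma final_S:
  fixes g :: "nat \<Rightarrow> real"
  assumes K0: "K0 > 0" and p1: "p \<ge> 1" and dl: "\<delta> > 0" and ka: "\<kappa> \<ge> 20"
    and s: "0 < \<sigma>" "\<sigma> < 1" and c0: "c0 > 0" and M: "M > 0"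
    and low: "\<And>d. c0 * \<sigma> ^ d \<le> g d" and up: "\<And>d. g d \<le> M * (\<sigma> powr (9/10)) ^ d"
  shows "eventually (\<lambda>t. real (Inf {d. 1 \<le> d \<and> g d \<le> K0 * sqrt (real d) * sqrt ((p * real d + ln (t / \<delta>)) / t)})
     \<le> \<kappa> * real (Inf {d. 1 \<le> d \<and> g d \<le> K0 * sqrt (real d) * sqrt ((p * real d + ln ((t / \<kappa>\<^sup>2) / \<delta>)) / (t / \<kappa>\<^sup>2))}) / 8) at_top"
proof -
  define F where "F d t = K0 * sqrt (real d) * sqrt ((p * real d + ln (t / \<delta>)) / t)" for d t
  define S where "S t = {d. 1 \<le> d \<and> g d \<le> F d t}" for t
  define l where "l = - ln \<sigma>"
  have l0: "l > 0" unfolding l_def using s by simp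
  define \<theta> where "\<theta> = \<sigma> powr (9/10)"
  have th0: "\<theta> > 0" unfolding \<theta>_def using s by simp
  have lnth: "ln \<theta> = - (9/10) * l" unfolding \<theta>_def l_def using s by (simp add: ln_powr)
  have thd: "\<theta> ^ d = exp (- ((9/10) * l * real d))" for d
    using pow_exp[OF th0, of d] lnth by (simp add: algebra_simps)
  have sd: "\<sigma> ^ d = exp (- (l * real d))" for d
    using pow_exp[OF s(1), of d] unfolding l_def by (simp add: algebra_simps)
  define q where "q = ln (M / K0)"
  define du where "du t = nat \<lceil>(q + ln t / 2) / ((9/10) * l)\<rceil> + 1" for t
  have du_bound: "real (du t) \<le> (q + ln t / 2) / ((9/10) * l) + 2" if X: "q + ln t / 2 \<ge> 0" for t
  proof -
    define X where "X = (q + ln t / 2) / ((9/10) * l)"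
    have X0: "X \<ge> 0" unfolding X_def using X l0 by simp
    have "real (nat \<lceil>X\<rceil>) = of_int \<lceil>X\<rceil>" using X0 by simp
    also have "\<dots> \<le> X + 1" by (rule of_int_ceiling_le_add_one)
    finally show ?thesis unfolding du_def X_def by simp
  qed
  have duS: "du t \<in> S t" if t: "t \<ge> \<delta>" for t
  proof -
    have tp: "t > 0" using t dl by simp
    have d1: "1 \<le> du t" unfolding du_def by simp
    have "(q + ln t / 2) / ((9/10) * l) \<le> real (du t)" unfolding du_def by linarith
    then have ge: "q + ln t / 2 \<le> (9/10) * l * real (du t)" using l0 by (simp add: divide_le_eq mult.commute)
    have "g (du t) \<le> M * \<theta> ^ du t" using up unfolding \<theta>_def by simp
    also have "\<dots> = M * exp (- ((9/10) * l * real (du t)))" by (simp add: thd)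
    also have "\<dots> \<le> M * exp (- (q + ln t / 2))" using ge M by simp
    also have "\<dots> = K0 / sqrt t"
    proof -
      have "exp (- (q + ln t / 2)) = inverse (exp q) * inverse (exp (ln t / 2))"
        by (simp add: exp_minus[symmetric] exp_add[symmetric] algebra_simps)
      also have "exp q = M / K0" unfolding q_def using M K0 by simp
      also have "exp (ln t / 2) = sqrt t" using sqrt_exp[OF tp] by simp
      finally show ?thesis using M K0 tp by (simp add: field_simps)
    qed
    also have "\<dots> \<le> F (du t) t"
    proof -
      have "1 \<le> sqrt (real (du t))" using d1 by simp
      moreover have "1 / t \<le> (p * real (du t) + ln (t / \<delta>)) / t"
      proof -
        have "ln (t / \<delta>) \<ge> 0" using t dl by simp
        moreover have "1 * 1 \<le> p * real (du t)" using p1 d1 by (intro mult_mono) auto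
        ultimately show ?thesis using tp by (intro divide_right_mono) auto
      qed
      then have "sqrt (1 / t) \<le> sqrt ((p * real (du t) + ln (t / \<delta>)) / t)" by (rule real_sqrt_le_mono)
      ultimately have "1 * sqrt (1 / t) \<le> sqrt (real (du t)) * sqrt ((p * real (du t) + ln (t / \<delta>)) / t)"
        using tp by (intro mult_mono) auto
      then have "K0 * sqrt (1 / t) \<le> K0 * (sqrt (real (du t)) * sqrt ((p * real (du t) + ln (t / \<delta>)) / t))"
        using K0 by (intro mult_left_mono) auto
      then show ?thesis unfolding F_def using tp by (simp add: real_sqrt_divide mult.assoc)
    qed
    finally show ?thesis unfolding S_def using d1 by simp
  qed
  define Q where "Q = \<bar>ln (\<kappa>\<^sup>2 * \<delta>)\<bar>"
  define b where "b = p / l + 1"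
  have "p / l > 0" using p1 l0 by simp
  then have b0: "b > 0" unfolding b_def by simp
  have k20: "\<kappa>\<^sup>2 > 0" using ka by simp
  have evL: "eventually (\<lambda>t. K0 * sqrt (ln t / l) * sqrt ((b * ln t + Q) * \<kappa>\<^sup>2 / t) < c0 * t powr (-0.475)) at_top"
    by (rule asym_L[OF K0 c0 b0 l0 k20])
  have evC: "eventually (\<lambda>t. (q + ln t / 2) / 0.9 + 2 * l \<le> 2.5 * 0.95 * ln t / 2) at_top"
    by (rule asym_C[OF l0])
  have ev1: "eventually (\<lambda>t. t \<ge> max 1 (\<kappa>\<^sup>2 * \<delta>)) at_top" by (rule eventually_ge_at_top)
  have evQ: "eventually (\<lambda>t. q + ln t / 2 \<ge> 0) at_top" by (rule asym_Q)
  have "eventually (\<lambda>t. real (Inf (S t)) \<le> \<kappa> * real (Inf (S (t / \<kappa>\<^sup>2))) / 8) at_top"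
    using evL evC ev1 evQ
  proof eventually_elim
    case (elim t)
    have t1: "t \<ge> 1" and tk: "t \<ge> \<kappa>\<^sup>2 * \<delta>" using elim(3) by auto
    have tp: "t > 0" using t1 by simp
    have lt0: "ln t \<ge> 0" using t1 by simp
    define t' where "t' = t / \<kappa>\<^sup>2"
    have t'd: "t' \<ge> \<delta>" unfolding t'_def using tk k20 by (simp add: le_divide_eq mult.commute)
    have t'p: "t' > 0" using t'd dl by simp
    have notin: "F d t' < g d" if d: "1 \<le> d" "real d \<le> 0.95 * ln t / (2 * l)" for d
    proof -
      have dle: "real d \<le> ln t / l"
      proof -
        have "0.95 * ln t / (2 * l) \<le> ln t / l" using lt0 l0 by (simp add: divide_simps)
        then show ?thesis using d(2) by linarith
      qed
      have sq1: "sqrt (real d) \<le> sqrt (ln t / l)" using dle by (rule real_sqrt_le_mono)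
      have X0: "0 \<le> (p * real d + ln (t' / \<delta>)) / t'"
        using t'd dl t'p p1 by (intro divide_nonneg_pos) auto
      have "p * real d + ln (t' / \<delta>) \<le> b * ln t + Q"
      proof -
        have "p * real d \<le> p * (ln t / l)" using dle p1 by (intro mult_left_mono) auto
        moreover have "ln (t' / \<delta>) = ln t - ln (\<kappa>\<^sup>2 * \<delta>)"
          unfolding t'_def using tp k20 dl by (simp add: ln_div ln_mult)
        moreover have "- ln (\<kappa>\<^sup>2 * \<delta>) \<le> Q" unfolding Q_def by simp
        ultimately show ?thesis unfolding b_def by (simp add: algebra_simps)
      qed
      then have "(p * real d + ln (t' / \<delta>)) / t' \<le> (b * ln t + Q) / t'" using t'p by (intro divide_right_mono) auto
      also have "\<dots> = (b * ln t + Q) * \<kappa>\<^sup>2 / t" unfolding t'_def using k20 by simp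
      finally have sq2: "sqrt ((p * real d + ln (t' / \<delta>)) / t') \<le> sqrt ((b * ln t + Q) * \<kappa>\<^sup>2 / t)"
        by (rule real_sqrt_le_mono)
      have "F d t' \<le> K0 * sqrt (ln t / l) * sqrt ((b * ln t + Q) * \<kappa>\<^sup>2 / t)"
        unfolding F_def mult.assoc using K0 X0 sq1 sq2
        by (intro mult_left_mono mult_mono) auto
      also have "\<dots> < c0 * t powr (-0.475)" by (rule elim(1))
      also have "\<dots> \<le> c0 * \<sigma> ^ d"
      proof -
        have "t powr (-0.475) = exp (- (0.475 * ln t))" using tp by (simp add: powr_def)
        also have "\<dots> \<le> exp (- (l * real d))"
        proof -
          have "l * real d \<le> l * (0.95 * ln t / (2 * l))" using d(2) l0 by (intro mult_left_mono) auto
          also have "\<dots> = 0.475 * ln t" using l0 by simp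
          finally show ?thesis by simp
        qed
        finally show ?thesis using c0 sd by simp
      qed
      also have "\<dots> \<le> g d" by (rule low)
      finally show ?thesis .
    qed
    have neS: "S t' \<noteq> {}" using duS[OF t'd] by blast
    have mS: "Inf (S t') \<in> S t'" by (rule Inf_nat_def1[OF neS])
    have lowI: "0.95 * ln t / (2 * l) < real (Inf (S t'))"
    proof (rule ccontr)
      assume "\<not> ?thesis"
      then have le: "real (Inf (S t')) \<le> 0.95 * ln t / (2 * l)" by simp
      have "1 \<le> Inf (S t')" using mS unfolding S_def by simp
      then have "F (Inf (S t')) t' < g (Inf (S t'))" using notin le by blast
      then show False using mS unfolding S_def by simp
    qed
    have upI: "real (Inf (S t)) \<le> (q + ln t / 2) / ((9/10) * l) + 2"
    proof -
      have k1: "1 \<le> \<kappa>\<^sup>2" using ka by (intro one_le_power) simp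
      have "1 * \<delta> \<le> \<kappa>\<^sup>2 * \<delta>" using k1 dl by (intro mult_right_mono) auto
      then have "\<delta> \<le> t" using tk by simp
      then have "Inf (S t) \<le> du t" by (rule nat_Inf_le[OF duS])
      then show ?thesis using du_bound[OF elim(4)] by linarith
    qed
    have C: "(q + ln t / 2) / ((9/10) * l) + 2 \<le> 2.5 * (0.95 * ln t / (2 * l))"
    proof -
      have "((q + ln t / 2) / 0.9 + 2 * l) / l \<le> (2.5 * 0.95 * ln t / 2) / l"
        using elim(2) l0 by (intro divide_right_mono) auto
      then show ?thesis using l0 by (simp add: field_simps)
    qed
    have "2.5 * (0.95 * ln t / (2 * l)) \<le> \<kappa> / 8 * (0.95 * ln t / (2 * l))"
      using ka lt0 l0 by (intro mult_right_mono) auto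
    also have "\<dots> \<le> \<kappa> / 8 * real (Inf (S t'))" using lowI ka by (intro mult_left_mono) auto
    finally show ?case using upI C unfolding t'_def by simp
  qed
  then show ?thesis unfolding S_def F_def .
qed

lemma div_const_at_top: "c > 0 \<Longrightarrow> filterlim (\<lambda>t::real. t / c) at_top at_top"
  by real_asymp

theorem proposition17:
  fixes C A B :: "real mat" and n p m :: nat and Cc \<beta> R \<kappa> \<delta> :: real
  assumes "C \<in> carrier_mat p n" and "A \<in> carrier_mat n n" and "B \<in> carrier_mat n m"
    and "p > 0" and "n > 0" and "m > 0"
    and "spectral_radius (map_mat complex_of_real A) < 1"
    and "\<kappa> \<ge> 20" and "\<delta> > 0" and "Cc > 0" and "\<beta> > 0" and "R > 0"
  shows "T2 C A B Cc \<beta> R \<kappa> \<delta> < \<infinity>"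
proof -
  note Cc = assms(1) and Ac = assms(2) and Bc = assms(3) and p0 = assms(4) and n0 = assms(5)
    and m0 = assms(6) and sr = assms(7) and ka = assms(8) and dl = assms(9)
  define K0 where "K0 = Cc * \<beta> * R"
  have K0: "K0 > 0" unfolding K0_def using assms(10-12) by simp
  define E where "E x k = (C * (A ^\<^sub>m k) * B) $$ (fst x, snd x)" for x :: "nat \<times> nat" and k
  define I where "I = {..<p} \<times> {..<m}"
  have finI: "finite I" unfolding I_def by simp
  have gs: "goodset E I"
  proof (rule goodset_finite[OF finI])
    fix x assume "x \<in> I"
    then obtain a b where x: "x = (a, b)" "a < p" "b < m" unfolding I_def by auto
    have "E x = (\<lambda>k. (C * (A ^\<^sub>m k) * B) $$ (a, b))" unfolding E_def x by simp
    then show "good (E x)" using entry_good[OF Cc Ac Bc x(2) x(3) n0 sr] by simp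
  qed
  have Eab: "E (a, b) k = (C * (A ^\<^sub>m k) * B) $$ (a, b)" for a b k unfolding E_def by simp
  have glob: "\<exists>\<theta>1 M. 0 < \<theta>1 \<and> \<theta>1 < 1 \<and> 0 \<le> M \<and>
      (\<forall>a b k. a < p \<longrightarrow> b < m \<longrightarrow> \<bar>(C * (A ^\<^sub>m k) * B) $$ (a, b)\<bar> \<le> M * \<theta>1 ^ k)"
  proof -
    have "\<exists>\<theta>1 M. 0 < \<theta>1 \<and> \<theta>1 < 1 \<and> (\<forall>x\<in>I. \<forall>k. \<bar>E x k\<bar> \<le> M * \<theta>1 ^ k)"
      using gs
    proof (cases rule: goodset_cases)
      case (z K)
      obtain M where "\<forall>x\<in>I. \<forall>k. \<bar>E x k\<bar> \<le> M * (1/2) ^ k"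
        using fam_zero_bound[OF finI z, of "1/2"] by auto
      then show ?thesis by (intro exI[of _ "1/2"] exI[of _ M]) auto
    next
      case (s \<sigma>)
      have "(\<sigma> + 1) / 2 > \<sigma>" using s by simp
      then obtain M where "\<forall>x\<in>I. \<forall>k. \<bar>E x k\<bar> \<le> M * ((\<sigma> + 1) / 2) ^ k" using s(4) by blast
      then show ?thesis using s(1,2) by (intro exI[of _ "(\<sigma> + 1) / 2"] exI[of _ M]) auto
    qed
    then obtain \<theta>1 M where th: "0 < \<theta>1" "\<theta>1 < 1" and bd: "\<forall>x\<in>I. \<forall>k. \<bar>E x k\<bar> \<le> M * \<theta>1 ^ k" by blast
    have "\<bar>(C * (A ^\<^sub>m k) * B) $$ (a, b)\<bar> \<le> max M 0 * \<theta>1 ^ k" if "a < p" "b < m" for a b k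
    proof -
      have "\<bar>E (a, b) k\<bar> \<le> M * \<theta>1 ^ k" using bd that unfolding I_def by auto
      also have "\<dots> \<le> max M 0 * \<theta>1 ^ k" using th by (intro mult_right_mono) auto
      finally show ?thesis unfolding Eab .
    qed
    then show ?thesis using th by (intro exI[of _ \<theta>1] exI[of _ "max M 0"]) auto
  qed
  then obtain \<theta>1 M1 where th1: "0 < \<theta>1" "\<theta>1 < 1" "0 \<le> M1"
    and eb1: "\<And>a b k. a < p \<Longrightarrow> b < m \<Longrightarrow> \<bar>(C * (A ^\<^sub>m k) * B) $$ (a, b)\<bar> \<le> M1 * \<theta>1 ^ k" by blast
  have th1': "0 < \<theta>1" "\<theta>1 < (\<theta>1 + 1) / 2" "(\<theta>1 + 1) / 2 < 1" using th1 by auto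
  define g where "g d = l2_opnorm (Kd C A B d)" for d
  have bddK: "bdd_above (l2set (Kd C A B d))" for d
    by (rule hankel_up(2)[OF Cc Bc p0 m0 th1' th1(3) eb1])
  have colK: "summable (\<lambda>i. (Kd C A B d i c)\<^sup>2)" for d c
    by (rule hankel_up(3)[OF Cc Bc p0 m0 th1' th1(3) eb1])
  have glow: "\<bar>Kd C A B d r c\<bar> \<le> g d" for d r c
    unfolding g_def by (rule opnorm_col_lower[OF bddK colK])
  have g0: "g d \<ge> 0" for d using glow[of d 0 0] by linarith
  have dsq: "d_star C A B Cc \<beta> R t \<delta> =
      Inf {d. 1 \<le> d \<and> g d \<le> K0 * sqrt (real d) * sqrt ((real p * real d + ln (t / \<delta>)) / t)}" for t
  proof -
    have "dim_row C = p" using Cc by simp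
    then show ?thesis unfolding d_star_def g_def Kd_def K0_def by simp
  qed
  have p1: "real p \<ge> 1" using p0 by simp
  have k20: "\<kappa>\<^sup>2 > 0" using ka by simp
  have ev: "eventually (\<lambda>t. real (d_star C A B Cc \<beta> R t \<delta>) \<le> \<kappa> * real (d_star C A B Cc \<beta> R (t / \<kappa>\<^sup>2) \<delta>) / 8) at_top"
    using gs
  proof (cases rule: goodset_cases)
    case (z K1)
    have gz: "g d = 0" if d: "d \<ge> K1" for d
    proof -
      have "Kd C A B d r c = 0" for r c
      proof (cases "r div p < d \<and> c div m < d")
        case True then show ?thesis unfolding Kd_eq[OF Cc Bc] by simp
      next
        case False
        then have "r div p + c div m \<ge> K1" using d by auto
        moreover have "(r mod p, c mod m) \<in> I" unfolding I_def using p0 m0 by simp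
        ultimately have "E (r mod p, c mod m) (r div p + c div m) = 0" using z by blast
        then show ?thesis unfolding Kd_eq[OF Cc Bc] Eab using False by simp
      qed
      then have "Kd C A B d = (\<lambda>_ _. 0)" by (intro ext)
      moreover have "l2_opnorm (\<lambda>_ _. 0) \<le> 0"
        using opnorm_upper(1)[of "\<lambda>_. 0" "\<lambda>_. 0" "\<lambda>_. 0" "\<lambda>_. 0" "\<lambda>_ _. 0"] by simp
      ultimately show ?thesis using g0[of d] unfolding g_def by simp
    qed
    obtain D where D: "D \<ge> 1" and evD: "eventually (\<lambda>t. Inf {d. 1 \<le> d \<and> g d \<le> K0 * sqrt (real d) * sqrt ((real p * real d + ln (t / \<delta>)) / t)} = D) at_top"
    proof -
      have a1: "max K1 1 \<ge> 1" by simp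
      have a2: "g (max K1 1) = 0" using gz by simp
      have a3: "real p \<ge> 0" by simp
      have a4: "K0 \<ge> 0" using K0 by simp
      show ?thesis using final_Z[of \<delta> g "max K1 1" "real p" K0, OF dl g0 a1 a2 a3 a4] that by blast
    qed
    have evD': "eventually (\<lambda>t. Inf {d. 1 \<le> d \<and> g d \<le> K0 * sqrt (real d) * sqrt ((real p * real d + ln ((t / \<kappa>\<^sup>2) / \<delta>)) / (t / \<kappa>\<^sup>2))} = D) at_top"
      using filterlim_iff[THEN iffD1, OF div_const_at_top[OF k20], rule_format, OF evD] .
    show ?thesis using evD evD'
    proof eventually_elim
      case (elim t)
      have "real D \<le> \<kappa> * real D / 8" using ka D by (simp add: field_simps)
      then show ?case unfolding dsq elim(1) elim(2) .
    qed
  next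
    case (s \<sigma>)
    obtain c0 N x where c0: "c0 > 0" and xI: "x \<in> I"
      and lowx: "\<And>k. \<exists>i\<le>N. c0 * \<sigma> ^ k \<le> \<bar>E x (k + i)\<bar>" using s(3) by blast
    obtain a b where x: "x = (a, b)" "a < p" "b < m" using xI unfolding I_def by auto
    have low: "c0 * \<sigma> ^ d \<le> g d" for d
    proof -
      obtain i where "c0 * \<sigma> ^ d \<le> \<bar>E x (d + i)\<bar>" using lowx by blast
      moreover have "\<bar>E x (d + i)\<bar> = \<bar>Kd C A B d ((d + i) * p + a) b\<bar>"
      proof -
        have "((d + i) * p + a) div p = d + i" using x p0 by simp
        moreover have "((d + i) * p + a) mod p = a" using x p0 by simp
        moreover have "b div m = 0" "b mod m = b" using x by auto
        ultimately show ?thesis unfolding Kd_eq[OF Cc Bc] x Eab by simp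
      qed
      ultimately show ?thesis using glow[of d "(d + i) * p + a" b] by linarith
    qed
    define \<theta> where "\<theta> = \<sigma> powr (9/10)"
    have lns: "ln \<sigma> < 0" using s by simp
    have th_gt: "\<sigma> < \<theta>"
    proof -
      have "ln \<sigma> < 9/10 * ln \<sigma>" using lns by simp
      then have "exp (ln \<sigma>) < exp (9/10 * ln \<sigma>)" by simp
      then show ?thesis unfolding \<theta>_def using s by (simp add: powr_def)
    qed
    have th_lt: "\<theta> < 1"
    proof -
      have "exp (9/10 * ln \<sigma>) < exp 0" using lns by simp
      then show ?thesis unfolding \<theta>_def using s by (simp add: powr_def)
    qed
    define \<theta>1 where "\<theta>1 = (\<sigma> + \<theta>) / 2"
    have t1: "0 < \<theta>1" "\<theta>1 < \<theta>" "\<sigma> < \<theta>1" unfolding \<theta>1_def using s th_gt by auto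
    obtain M where M: "\<forall>y\<in>I. \<forall>k. \<bar>E y k\<bar> \<le> M * \<theta>1 ^ k" using s(4) t1(3) by blast
    have ebM: "\<bar>(C * (A ^\<^sub>m k) * B) $$ (a, b)\<bar> \<le> max M 0 * \<theta>1 ^ k" if "a < p" "b < m" for a b k
    proof -
      have "\<bar>E (a, b) k\<bar> \<le> M * \<theta>1 ^ k" using M that unfolding I_def by auto
      also have "\<dots> \<le> max M 0 * \<theta>1 ^ k" using t1 by (intro mult_right_mono) auto
      finally show ?thesis unfolding Eab .
    qed
    obtain M' where M': "\<forall>d. l2_opnorm (Kd C A B d) \<le> M' * \<theta> ^ d"
      using hankel_up(1)[OF Cc Bc p0 m0 t1(1) t1(2) th_lt _ ebM] by auto
    have up: "g d \<le> max M' 1 * (\<sigma> powr (9/10)) ^ d" for d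
    proof -
      have "g d \<le> M' * \<theta> ^ d" using M' unfolding g_def by blast
      also have "\<dots> \<le> max M' 1 * \<theta> ^ d" using t1 by (intro mult_right_mono) auto
      finally show ?thesis unfolding \<theta>_def .
    qed
    have "eventually (\<lambda>t. real (Inf {d. 1 \<le> d \<and> g d \<le> K0 * sqrt (real d) * sqrt ((real p * real d + ln (t / \<delta>)) / t)})
     \<le> \<kappa> * real (Inf {d. 1 \<le> d \<and> g d \<le> K0 * sqrt (real d) * sqrt ((real p * real d + ln ((t / \<kappa>\<^sup>2) / \<delta>)) / (t / \<kappa>\<^sup>2))}) / 8) at_top"
      by (rule final_S[OF K0 p1 dl ka s(1,2) c0 _ low up]) simp
    then show ?thesis unfolding dsq .
  qed
  then obtain N0 where N0: "\<And>t. t \<ge> N0 \<Longrightarrow> real (d_star C A B Cc \<beta> R t \<delta>) \<le> \<kappa> * real (d_star C A B Cc \<beta> R (t / \<kappa>\<^sup>2) \<delta>) / 8"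
    unfolding eventually_at_top_linorder by blast
  define T where "T = max N0 1"
  have Tp: "T > 0" unfolding T_def by simp
  have Tall: "\<forall>t \<ge> T. real (d_star C A B Cc \<beta> R t \<delta>) \<le> \<kappa> * real (d_star C A B Cc \<beta> R (t / \<kappa>\<^sup>2) \<delta>) / 8"
    using N0 unfolding T_def by auto
  have "ereal T \<in> {ereal T | T. T > 0 \<and> (\<forall>t \<ge> T.
      real (d_star C A B Cc \<beta> R t \<delta>) \<le> \<kappa> * real (d_star C A B Cc \<beta> R (t / \<kappa>\<^sup>2) \<delta>) / 8)}"
    unfolding mem_Collect_eq by (rule exI[of _ T]) (use Tp Tall in blast)
  then have "T2 C A B Cc \<beta> R \<kappa> \<delta> \<le> ereal T" unfolding T2_def by (rule Inf_lower)
  moreover have "ereal T < \<infinity>" by simp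
  ultimately show ?thesis by (rule le_less_trans)
qed

end
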